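(* Let $0<l<1$, $x_0\in\mathbb{R}^n$, and let $j$ be a positive integer. (i) If $a\in S^{-n}_{0,\delta}$ with $0\le\delta<1$, then for all $x,z\in Q(x_0,l)$ and all Schwartz $u$, $$\int_{\mathbb{R}^n}|u(y)|\,|K_j(x,y)-K_j(z,y)|\,dy\le C\,2^jl\,Mu(x_0).$$ (ii) If $a\in L^\infty S^{-n}_0$, then for all $x,z\in Q(x_0,l)$ and all Schwartz $u$, $$\int_{\mathbb{R}^n}|u(y)|\,|K^*_j(x,y)-K^*_j(z,y)|\,dy\le C\,2^jl\,Mu(x_0).$$ Here $C$ is independent of $u,x_0,l,j,x,z$.
   Context: $S^m_{\varrho,\delta}$: smooth $a$ with $|\partial_x^\beta\partial_\xi^\alpha a|\le C_{\alpha,\beta}\langle\xi\rangle^{m-\varrho|\alpha|+\delta|\beta|}$; $L^\infty S^m_\varrho$: $a$ bounded measurable in $x$, smooth in $\xi$, $\|\partial^\alpha_\xi a(\cdot,\xi)\|_{L^\infty}\le C_\alpha\langle\xi\rangle^{m-\varrho|\alpha|}$. $Q(x_0,l)$ is the axis-parallel cube centered at $x_0$ with side length $l$. $Mu$ is the Hardy–Littlewood maximal function over axis-parallel cubes containing the point. Littlewood–Paley decomposition: fix $C_0>1$ and $\psi_{-1},\psi\in C_c^\infty(\mathbb{R}^n)$ with values in $[0,1]$, $\operatorname{supp}\psi_{-1}\subset\{|\xi|\le 2C_0\}$, $\operatorname{supp}\psi\subset\{C_0^{-1}\le|\xi|\le 2C_0\}$, and $\psi_{-1}(\xi)+\sum_{j\ge1}\psi(2^{-j}\xi)=1$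 for all $\xi$. Set $a_0(x,\xi)=a(x,\xi)\psi_{-1}(\xi)$ and $a_j(x,\xi)=a(x,\xi)\psi(2^{-j}\xi)$ for $j\ge1$. Define $K_j(x,y)=(2\pi)^{-n}\int e^{i\langle x-y,\xi\rangle}a_j(x,\xi)d\xi$, $K^*_j(x,y)=(2\pi)^{-n}\int e^{i\langle x-y,\xi\rangle}a_j(y,\xi)d\xi$, and $T_ju(x)=\int K_j(x,y)u(y)dy$, $T_j^*u(x)=\int K^*_j(x,y)u(y)dy$. *)

theory Defs
  imports "HOL-Analysis.Analysis"
begin

definition dpd :: "'a::real_normed_vector \<Rightarrow> ('a \<Rightarrow> 'b::real_normed_vector) \<Rightarrow> 'a \<Rightarrow> 'b" where
  "dpd v f x = vector_derivative (\<lambda>t::real. f (x + t *\<^sub>R v)) (at 0)"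

fun dpds :: "'a::real_normed_vector list \<Rightarrow> ('a \<Rightarrow> 'b::real_normed_vector) \<Rightarrow> 'a \<Rightarrow> 'b" where
  "dpds [] f = f"
| "dpds (v # vs) f = dpd v (dpds vs f)"

definition smooth_fn :: "('a::euclidean_space \<Rightarrow> 'b::real_normed_vector) \<Rightarrow> bool" where
  "smooth_fn f \<longleftrightarrow> (\<forall>vs. set vs \<subseteq> Basis \<longrightarrow>
      continuous_on UNIV (dpds vs f) \<and>
      (\<forall>v\<in>Basis. \<forall>x. (\<lambda>t::real. dpds vs f (x + t *\<^sub>R v)) differentiable (at 0)))"

definition jbr :: "'a::real_normed_vector \<Rightarrow> real" where
  "jbr \<xi> = sqrt (1 + (norm \<xi>)\<^sup>2)"

definition symbol_S :: "real \<Rightarrow> real \<Rightarrow> real \<Rightarrow> ('a::euclidean_space \<Rightarrow> 'a \<Rightarrow> complex) \<Rightarrow> bool" where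
  "symbol_S m \<rho> \<delta> a \<longleftrightarrow> smooth_fn (\<lambda>(x, \<xi>). a x \<xi>) \<and>
     (\<forall>bs as. set bs \<subseteq> Basis \<longrightarrow> set as \<subseteq> Basis \<longrightarrow>
       (\<exists>C. \<forall>x \<xi>. norm (dpds (map (\<lambda>b. (b, 0)) bs @ map (\<lambda>b. (0, b)) as)
                          (\<lambda>(x, \<xi>). a x \<xi>) (x, \<xi>))
               \<le> C * jbr \<xi> powr (m - \<rho> * real (length as) + \<delta> * real (length bs))))"

definition symbol_LinfS :: "real \<Rightarrow> real \<Rightarrow> ('a::euclidean_space \<Rightarrow> 'a \<Rightarrow> complex) \<Rightarrow> bool" where
  "symbol_LinfS m \<rho> a \<longleftrightarrow> (\<forall>x. smooth_fn (a x)) \<and>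
     (\<forall>\<xi>. (\<lambda>x. a x \<xi>) \<in> borel_measurable lborel) \<and>
     (\<forall>as. set as \<subseteq> Basis \<longrightarrow>
       (\<exists>C. \<forall>\<xi>. AE x in lborel. norm (dpds as (a x) \<xi>) \<le> C * jbr \<xi> powr (m - \<rho> * real (length as))))"

definition schwartz :: "('a::euclidean_space \<Rightarrow> complex) \<Rightarrow> bool" where
  "schwartz u \<longleftrightarrow> smooth_fn u \<and>
     (\<forall>vs. set vs \<subseteq> Basis \<longrightarrow> (\<forall>N::nat. bounded (range (\<lambda>x. (1 + norm x) ^ N * norm (dpds vs u x)))))"

definition cube :: "'a::euclidean_space \<Rightarrow> real \<Rightarrow> 'a set" where
  "cube c s = {y. \<forall>b\<in>Basis. \<bar>(y - c) \<bullet> b\<bar> \<le> s / 2}"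

definition maximal_fn :: "('a::euclidean_space \<Rightarrow> complex) \<Rightarrow> 'a \<Rightarrow> ennreal" where
  "maximal_fn u x = (SUP Q \<in> {cube c s | c s. s > 0 \<and> x \<in> cube c s}.
       ennreal (1 / measure lborel Q) * (\<integral>\<^sup>+ y\<in>Q. ennreal (norm (u y)) \<partial>lborel))"

definition LP_data :: "real \<Rightarrow> ('a::euclidean_space \<Rightarrow> real) \<Rightarrow> ('a \<Rightarrow> real) \<Rightarrow> bool" where
  "LP_data C0 psim1 psi \<longleftrightarrow> C0 > 1 \<and> smooth_fn psim1 \<and> smooth_fn psi \<and>
     (\<forall>\<xi>. 0 \<le> psim1 \<xi> \<and> psim1 \<xi> \<le> 1 \<and> 0 \<le> psi \<xi> \<and> psi \<xi> \<le> 1) \<and>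
     closure {\<xi>. psim1 \<xi> \<noteq> 0} \<subseteq> {\<xi>. norm \<xi> \<le> 2 * C0} \<and>
     closure {\<xi>. psi \<xi> \<noteq> 0} \<subseteq> {\<xi>. inverse C0 \<le> norm \<xi> \<and> norm \<xi> \<le> 2 * C0} \<and>
     (\<forall>\<xi>. (\<lambda>j. psi ((2 powr - real j) *\<^sub>R \<xi>)) summable_on {1..} \<and>
          psim1 \<xi> + (\<Sum>\<^sub>\<infinity>j\<in>{1::nat..}. psi ((2 powr - real j) *\<^sub>R \<xi>)) = 1)"

definition piece :: "('a::euclidean_space \<Rightarrow> real) \<Rightarrow> ('a \<Rightarrow> real) \<Rightarrow> ('a \<Rightarrow> 'a \<Rightarrow> complex) \<Rightarrow> nat \<Rightarrow> 'a \<Rightarrow> 'a \<Rightarrow> complex" where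
  "piece psim1 psi a j x \<xi> =
     (if j = 0 then a x \<xi> * complex_of_real (psim1 \<xi>)
      else a x \<xi> * complex_of_real (psi ((2 powr - real j) *\<^sub>R \<xi>)))"

definition kernel_K :: "('a::euclidean_space \<Rightarrow> real) \<Rightarrow> ('a \<Rightarrow> real) \<Rightarrow> ('a \<Rightarrow> 'a \<Rightarrow> complex) \<Rightarrow> nat \<Rightarrow> 'a \<Rightarrow> 'a \<Rightarrow> complex" where
  "kernel_K psim1 psi a j x y = complex_of_real ((2 * pi) powr - real DIM('a)) *
     (\<integral>\<xi>. exp (\<i> * complex_of_real ((x - y) \<bullet> \<xi>)) * piece psim1 psi a j x \<xi> \<partial>lborel)"

definition kernel_Kstar :: "('a::euclidean_space \<Rightarrow> real) \<Rightarrow> ('a \<Rightarrow> real) \<Rightarrow> ('a \<Rightarrow> 'a \<Rightarrow> complex) \<Rightarrow> nat \<Rightarrow> 'a \<Rightarrow> 'a \<Rightarrow> complex" where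
  "kernel_Kstar psim1 psi a j x y = complex_of_real ((2 * pi) powr - real DIM('a)) *
     (\<integral>\<xi>. exp (\<i> * complex_of_real ((x - y) \<bullet> \<xi>)) * piece psim1 psi a j y \<xi> \<partial>lborel)"

end

theory Submission
  imports Defs
begin

definition Dk :: "'a::real_normed_vector \<Rightarrow> nat \<Rightarrow> ('a \<Rightarrow> 'b::real_normed_vector) \<Rightarrow> 'a \<Rightarrow> 'b" where
  "Dk e k f = dpds (replicate k e) f"

lemma Dk_0[simp]: "Dk e 0 f = f" by (simp add: Dk_def)
lemma Dk_Suc: "Dk e (Suc k) f = dpd e (Dk e k f)" by (simp add: Dk_def)

definition dd :: "'a::real_normed_vector \<Rightarrow> ('a \<Rightarrow> 'b::real_normed_vector) \<Rightarrow> bool" where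
  "dd e f \<longleftrightarrow> (\<forall>p. (\<lambda>t::real. f (p + t *\<^sub>R e)) differentiable (at 0))"

definition sdir :: "'a::real_normed_vector \<Rightarrow> ('a \<Rightarrow> 'b::real_normed_vector) \<Rightarrow> bool" where
  "sdir e f \<longleftrightarrow> (\<forall>k. dd e (Dk e k f))"

lemma dd_vd0:
  assumes "dd e f"
  shows "((\<lambda>t. f (p + t *\<^sub>R e)) has_vector_derivative dpd e f p) (at 0)"
  using assms unfolding dd_def dpd_def by (simp add: vector_derivative_works[symmetric])

lemma dd_vd:
  assumes "dd e f"
  shows "((\<lambda>t. f (p + t *\<^sub>R e)) has_vector_derivative dpd e f (p + t0 *\<^sub>R e)) (at t0)"
proof -
  have 1: "((\<lambda>t. t - t0) has_vector_derivative 1) (at t0)"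
    by (auto intro!: derivative_eq_intros)
  have 2: "((\<lambda>t. f ((p + t0 *\<^sub>R e) + t *\<^sub>R e)) has_vector_derivative dpd e f (p + t0 *\<^sub>R e)) (at ((\<lambda>t. t - t0) t0))"
    using dd_vd0[OF assms] by simp
  have "((\<lambda>t. f ((p + t0 *\<^sub>R e) + t *\<^sub>R e)) \<circ> (\<lambda>t. t - t0) has_vector_derivative 1 *\<^sub>R dpd e f (p + t0 *\<^sub>R e)) (at t0)"
    by (rule vector_diff_chain_at[OF 1 2])
  moreover have "(\<lambda>t. f ((p + t0 *\<^sub>R e) + t *\<^sub>R e)) \<circ> (\<lambda>t. t - t0) = (\<lambda>t. f (p + t *\<^sub>R e))"
    by (auto simp: fun_eq_iff algebra_simps)
  ultimately show ?thesis by simp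
qed

lemma dpd_eqI:
  assumes "((\<lambda>t. f (p + t *\<^sub>R e)) has_vector_derivative d) (at 0)"
  shows "dpd e f p = d"
  using assms unfolding dpd_def by (rule vector_derivative_at)

lemma dd_add:
  assumes "dd e f" "dd e g"
  shows "dd e (\<lambda>x. f x + g x)" "dpd e (\<lambda>x. f x + g x) = (\<lambda>x. dpd e f x + dpd e g x)"
proof -
  have h: "((\<lambda>t. f (p + t *\<^sub>R e) + g (p + t *\<^sub>R e)) has_vector_derivative dpd e f p + dpd e g p) (at 0)" for p
    by (rule has_vector_derivative_add[OF dd_vd0[OF assms(1)] dd_vd0[OF assms(2)]])
  show "dd e (\<lambda>x. f x + g x)" unfolding dd_def using h differentiableI_vector by blast
  show "dpd e (\<lambda>x. f x + g x) = (\<lambda>x. dpd e f x + dpd e g x)"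
    using h by (auto intro!: dpd_eqI)
qed

lemma dd_diff:
  assumes "dd e f" "dd e g"
  shows "dd e (\<lambda>x. f x - g x)" "dpd e (\<lambda>x. f x - g x) = (\<lambda>x. dpd e f x - dpd e g x)"
proof -
  have h: "((\<lambda>t. f (p + t *\<^sub>R e) - g (p + t *\<^sub>R e)) has_vector_derivative dpd e f p - dpd e g p) (at 0)" for p
    by (rule has_vector_derivative_diff[OF dd_vd0[OF assms(1)] dd_vd0[OF assms(2)]])
  show "dd e (\<lambda>x. f x - g x)" unfolding dd_def using h differentiableI_vector by blast
  show "dpd e (\<lambda>x. f x - g x) = (\<lambda>x. dpd e f x - dpd e g x)"
    using h by (auto intro!: dpd_eqI)
qed

lemma dd_mult:
  fixes f g :: "'a::real_normed_vector \<Rightarrow> 'b::real_normed_algebra"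
  assumes "dd e f" "dd e g"
  shows "dd e (\<lambda>x. f x * g x)" "dpd e (\<lambda>x. f x * g x) = (\<lambda>x. dpd e f x * g x + f x * dpd e g x)"
proof -
  have h: "((\<lambda>t. f (p + t *\<^sub>R e) * g (p + t *\<^sub>R e)) has_vector_derivative dpd e f p * g p + f p * dpd e g p) (at 0)" for p
    using has_vector_derivative_mult[OF dd_vd0[OF assms(1)] dd_vd0[OF assms(2)]]
    by (simp add: add.commute)
  show "dd e (\<lambda>x. f x * g x)" unfolding dd_def using h differentiableI_vector by blast
  show "dpd e (\<lambda>x. f x * g x) = (\<lambda>x. dpd e f x * g x + f x * dpd e g x)"
    using h by (auto intro!: dpd_eqI)
qed

lemma dd_sum:
  assumes "finite I" "\<And>i. i \<in> I \<Longrightarrow> dd e (f i)"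
  shows "dd e (\<lambda>x. \<Sum>i\<in>I. f i x)" "dpd e (\<lambda>x. \<Sum>i\<in>I. f i x) = (\<lambda>x. \<Sum>i\<in>I. dpd e (f i) x)"
proof -
  have h: "((\<lambda>t. \<Sum>i\<in>I. f i (p + t *\<^sub>R e)) has_vector_derivative (\<Sum>i\<in>I. dpd e (f i) p)) (at 0)" for p
    by (intro has_vector_derivative_sum dd_vd0 assms)
  show "dd e (\<lambda>x. \<Sum>i\<in>I. f i x)" unfolding dd_def using h differentiableI_vector by blast
  show "dpd e (\<lambda>x. \<Sum>i\<in>I. f i x) = (\<lambda>x. \<Sum>i\<in>I. dpd e (f i) x)"
    using h by (auto intro!: dpd_eqI)
qed

lemma dd_cmult:
  fixes f :: "'a::real_normed_vector \<Rightarrow> 'b::real_normed_algebra"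
  assumes "dd e f"
  shows "dd e (\<lambda>x. c * f x)" "dpd e (\<lambda>x. c * f x) = (\<lambda>x. c * dpd e f x)"
proof -
  have h: "((\<lambda>t. c * f (p + t *\<^sub>R e)) has_vector_derivative c * dpd e f p) (at 0)" for p
    by (rule has_vector_derivative_mult_right[OF dd_vd0[OF assms(1)]])
  show "dd e (\<lambda>x. c * f x)" unfolding dd_def using h differentiableI_vector by blast
  show "dpd e (\<lambda>x. c * f x) = (\<lambda>x. c * dpd e f x)"
    using h by (auto intro!: dpd_eqI)
qed


lemma Suc_choose': "Suc n choose k = (n choose k) + (if k = 0 then 0 else (n choose (k-1)))"
  by (cases k) auto
lemma leib_sum:
  fixes F G :: "nat \<Rightarrow> complex"
  shows "(\<Sum>i=0..n. of_nat (n choose i) * (F (Suc i) * G (n-i) + F i * G (Suc (n-i)))) =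
         (\<Sum>i=0..Suc n. of_nat (Suc n choose i) * F i * G (Suc n - i))"
proof -
  have a: "(\<Sum>i=0..Suc n. of_nat (n choose i) * F i * G (Suc n - i)) = (\<Sum>i=0..n. of_nat (n choose i) * F i * G (Suc (n-i)))"
    by (simp add: Suc_diff_le)
  have b: "(\<Sum>i=0..Suc n. of_nat (if i = 0 then 0 else (n choose (i-1))) * F i * G (Suc n - i)) = (\<Sum>i=0..n. of_nat (n choose i) * F (Suc i) * G (n-i))"
    by (subst sum.atLeast0_atMost_Suc_shift) simp
  show ?thesis
    unfolding Suc_choose' of_nat_add distrib_right sum.distrib a b
    by (simp add: algebra_simps sum.distrib)
qed

lemma Dk_add:
  assumes "sdir e f" "sdir e g"
  shows "Dk e k (\<lambda>x. f x + g x) = (\<lambda>x. Dk e k f x + Dk e k g x)"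
  by (induction k) (use assms in \<open>auto simp: Dk_Suc sdir_def dd_add\<close>)

lemma sdir_add: "sdir e f \<Longrightarrow> sdir e g \<Longrightarrow> sdir e (\<lambda>x. f x + g x)"
  unfolding sdir_def[of e "\<lambda>x. f x + g x"] by (simp add: Dk_add) (auto simp: sdir_def intro!: dd_add(1))

lemma Dk_diff:
  assumes "sdir e f" "sdir e g"
  shows "Dk e k (\<lambda>x. f x - g x) = (\<lambda>x. Dk e k f x - Dk e k g x)"
  by (induction k) (use assms in \<open>auto simp: Dk_Suc sdir_def dd_diff\<close>)

lemma sdir_diff: "sdir e f \<Longrightarrow> sdir e g \<Longrightarrow> sdir e (\<lambda>x. f x - g x)"
  unfolding sdir_def[of e "\<lambda>x. f x - g x"] by (simp add: Dk_diff) (auto simp: sdir_def intro!: dd_diff(1))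

lemma Dk_cmult:
  fixes f :: "'a::real_normed_vector \<Rightarrow> 'b::real_normed_algebra"
  assumes "sdir e f"
  shows "Dk e k (\<lambda>x. c * f x) = (\<lambda>x. c * Dk e k f x)"
  by (induction k) (use assms in \<open>auto simp: Dk_Suc sdir_def dd_cmult\<close>)

lemma sdir_cmult:
  fixes f :: "'a::real_normed_vector \<Rightarrow> 'b::real_normed_algebra"
  shows "sdir e f \<Longrightarrow> sdir e (\<lambda>x. c * f x)"
  unfolding sdir_def[of e "\<lambda>x. c * f x"] by (simp add: Dk_cmult) (auto simp: sdir_def intro!: dd_cmult(1))

lemma dd_term:
  fixes f g :: "'a::real_normed_vector \<Rightarrow> complex"
  assumes "dd e f" "dd e g"
  shows "dd e (\<lambda>x. c * f x * g x)"
    "dpd e (\<lambda>x. c * f x * g x) = (\<lambda>x. c * (dpd e f x * g x + f x * dpd e g x))"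
proof -
  have 1: "dd e (\<lambda>x. c * f x)" "dpd e (\<lambda>x. c * f x) = (\<lambda>x. c * dpd e f x)"
    using dd_cmult[OF assms(1)] by auto
  show "dd e (\<lambda>x. c * f x * g x)" using dd_mult(1)[OF 1(1) assms(2)] .
  show "dpd e (\<lambda>x. c * f x * g x) = (\<lambda>x. c * (dpd e f x * g x + f x * dpd e g x))"
    using dd_mult(2)[OF 1(1) assms(2)] 1(2) by (simp add: algebra_simps)
qed

lemma leibniz_Dk:
  fixes f g :: "'a::real_normed_vector \<Rightarrow> complex"
  assumes f: "sdir e f" and g: "sdir e g"
  shows "Dk e n (\<lambda>x. f x * g x) =
     (\<lambda>x. \<Sum>i = 0..n. of_nat (n choose i) * Dk e i f x * Dk e (n-i) g x)"
proof (induction n)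
  case 0 then show ?case by simp
next
  case (Suc n)
  have ddf: "dd e (Dk e i f)" for i using f sdir_def by blast
  have ddg: "dd e (Dk e i g)" for i using g sdir_def by blast
  have "Dk e (Suc n) (\<lambda>x. f x * g x) = dpd e (\<lambda>x. \<Sum>i = 0..n. of_nat (n choose i) * Dk e i f x * Dk e (n-i) g x)"
    by (simp add: Dk_Suc Suc)
  also have "\<dots> = (\<lambda>x. \<Sum>i = 0..n. dpd e (\<lambda>x. of_nat (n choose i) * Dk e i f x * Dk e (n-i) g x) x)"
    by (rule dd_sum(2)) (auto intro: dd_term ddf ddg)
  also have "\<dots> = (\<lambda>x. \<Sum>i = 0..n. of_nat (n choose i) * (Dk e (Suc i) f x * Dk e (n-i) g x + Dk e i f x * Dk e (Suc (n-i)) g x))"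
    by (simp add: dd_term(2)[OF ddf ddg] Dk_Suc)
  also have "\<dots> = (\<lambda>x. \<Sum>i = 0..Suc n. of_nat (Suc n choose i) * Dk e i f x * Dk e (Suc n-i) g x)"
  proof
    fix x
    show "(\<Sum>i = 0..n. of_nat (n choose i) * (Dk e (Suc i) f x * Dk e (n-i) g x + Dk e i f x * Dk e (Suc (n-i)) g x)) =
      (\<Sum>i = 0..Suc n. of_nat (Suc n choose i) * Dk e i f x * Dk e (Suc n-i) g x)"
      by (rule leib_sum)
  qed
  finally show ?case .
qed


lemma sdir_mult:
  fixes f g :: "'a::real_normed_vector \<Rightarrow> complex"
  assumes f: "sdir e f" and g: "sdir e g"
  shows "sdir e (\<lambda>x. f x * g x)"
  unfolding sdir_def
proof
  fix k
  have ddf: "dd e (Dk e i f)" for i using f sdir_def by blast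
  have ddg: "dd e (Dk e i g)" for i using g sdir_def by blast
  show "dd e (Dk e k (\<lambda>x. f x * g x))"
    unfolding leibniz_Dk[OF f g] by (rule dd_sum(1)) (auto intro: dd_term ddf ddg)
qed

lemma leib_bound:
  fixes f g :: "'a::real_normed_vector \<Rightarrow> complex"
  assumes f: "sdir e f" and g: "sdir e g"
    and F: "\<And>i. i \<le> n \<Longrightarrow> norm (Dk e i f x) \<le> F i"
    and G: "\<And>i. i \<le> n \<Longrightarrow> norm (Dk e i g x) \<le> G i"
  shows "norm (Dk e n (\<lambda>x. f x * g x) x) \<le> (\<Sum>i = 0..n. real (n choose i) * F i * G (n-i))"
proof -
  have "norm (Dk e n (\<lambda>x. f x * g x) x) \<le> (\<Sum>i = 0..n. norm (of_nat (n choose i) * Dk e i f x * Dk e (n-i) g x))"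
    unfolding leibniz_Dk[OF f g] by (rule norm_sum)
  also have "\<dots> \<le> (\<Sum>i = 0..n. real (n choose i) * F i * G (n-i))"
  proof (rule sum_mono)
    fix i assume i: "i \<in> {0..n}"
    have "norm (of_nat (n choose i) * Dk e i f x * Dk e (n-i) g x) = real (n choose i) * norm (Dk e i f x) * norm (Dk e (n-i) g x)"
      by (simp add: norm_mult)
    also have "\<dots> \<le> real (n choose i) * F i * G (n-i)"
    proof -
      have "0 \<le> F i" using F[of i] i by (meson norm_ge_zero order_trans atLeastAtMost_iff)
      then show ?thesis using F[of i] G[of "n-i"] i
        by (intro mult_mono mult_left_mono) auto
    qed
    finally show "norm (of_nat (n choose i) * Dk e i f x * Dk e (n-i) g x) \<le> real (n choose i) * F i * G (n-i)" .
  qed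
  finally show ?thesis .
qed

lemma mvt_dir:
  fixes g :: "'a::real_normed_vector \<Rightarrow> 'b::real_normed_vector"
  assumes "dd e g" "norm e = 1" "\<And>p. norm (dpd e g p) \<le> B"
  shows "norm (g p - g (p + s *\<^sub>R e)) \<le> B * \<bar>s\<bar>"
proof -
  have der: "((\<lambda>t. g (p + t *\<^sub>R e)) has_derivative (\<lambda>u. u *\<^sub>R dpd e g (p + t *\<^sub>R e))) (at t within UNIV)" for t
    using dd_vd[OF assms(1), of p t] unfolding has_vector_derivative_def by simp
  have on: "onorm (\<lambda>u::real. u *\<^sub>R dpd e g (p + t *\<^sub>R e)) \<le> B" for t
    using onorm_scaleR_left[OF bounded_linear_ident, of "dpd e g (p + t *\<^sub>R e)"] assms(3)
    by (simp add: onorm_id)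
  have "norm ((\<lambda>t. g (p + t *\<^sub>R e)) 0 - (\<lambda>t. g (p + t *\<^sub>R e)) s) \<le> B * norm (0 - s)"
    by (rule differentiable_bound[OF convex_UNIV der on]) auto
  then show ?thesis by simp
qed

lemma dd_shift:
  assumes "dd e g"
  shows "dd e (\<lambda>x. g (x + h))" "dpd e (\<lambda>x. g (x + h)) = (\<lambda>x. dpd e g (x + h))"
proof -
  have eq: "(\<lambda>t. g (p + t *\<^sub>R e + h)) = (\<lambda>t. g ((p + h) + t *\<^sub>R e))" for p
    by (simp add: algebra_simps)
  show "dd e (\<lambda>x. g (x + h))" using assms unfolding dd_def eq by blast
  show "dpd e (\<lambda>x. g (x + h)) = (\<lambda>x. dpd e g (x + h))"
    unfolding dpd_def by (simp add: eq)
qed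

lemma Dk_shift:
  assumes "sdir e g"
  shows "Dk e k (\<lambda>x. g (x + h)) = (\<lambda>x. Dk e k g (x + h))"
  by (induction k) (use assms in \<open>auto simp: Dk_Suc sdir_def dd_shift\<close>)

lemma sdir_shift: "sdir e g \<Longrightarrow> sdir e (\<lambda>x. g (x + h))"
  unfolding sdir_def[of e "\<lambda>x. g (x + h)"] by (simp add: Dk_shift) (auto simp: sdir_def intro!: dd_shift(1))

lemma dd_exp:
  fixes w :: "'a::real_inner"
  shows "dd e (\<lambda>x. exp (\<i> * complex_of_real (w \<bullet> x)))"
    "dpd e (\<lambda>x. exp (\<i> * complex_of_real (w \<bullet> x))) = (\<lambda>x. (\<i> * complex_of_real (w \<bullet> e)) * exp (\<i> * complex_of_real (w \<bullet> x)))"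
proof -
  have h: "((\<lambda>t. exp (\<i> * complex_of_real (w \<bullet> (p + t *\<^sub>R e)))) has_vector_derivative
      (\<i> * complex_of_real (w \<bullet> e)) * exp (\<i> * complex_of_real (w \<bullet> p))) (at 0)" for p
  proof -
    have "((\<lambda>z. exp (\<i> * complex_of_real (w \<bullet> p) + z * (\<i> * complex_of_real (w \<bullet> e)))) has_field_derivative
       exp (\<i> * complex_of_real (w \<bullet> p) + of_real 0 * (\<i> * complex_of_real (w \<bullet> e))) * (\<i> * complex_of_real (w \<bullet> e))) (at (of_real 0))"
      by (auto intro!: derivative_eq_intros)
    from has_vector_derivative_real_field[OF this]
    show ?thesis by (simp add: inner_add_right algebra_simps)
  qed
  show "dd e (\<lambda>x. exp (\<i> * complex_of_real (w \<bullet> x)))" unfolding dd_def using h differentiableI_vector by blast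
  show "dpd e (\<lambda>x. exp (\<i> * complex_of_real (w \<bullet> x))) = (\<lambda>x. (\<i> * complex_of_real (w \<bullet> e)) * exp (\<i> * complex_of_real (w \<bullet> x)))"
    using h by (auto intro!: dpd_eqI)
qed

lemma Dk_exp:
  fixes w :: "'a::real_inner"
  shows "Dk e k (\<lambda>x. exp (\<i> * complex_of_real (w \<bullet> x))) = (\<lambda>x. (\<i> * complex_of_real (w \<bullet> e)) ^ k * exp (\<i> * complex_of_real (w \<bullet> x)))"
proof (induction k)
  case (Suc k)
  show ?case
    unfolding Dk_Suc Suc dd_cmult(2)[OF dd_exp(1)] dd_exp(2) by (simp add: algebra_simps)
qed simp

lemma sdir_exp:
  fixes w :: "'a::real_inner"
  shows "sdir e (\<lambda>x. exp (\<i> * complex_of_real (w \<bullet> x)))"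
  unfolding sdir_def Dk_exp by (auto intro: dd_cmult dd_exp)

lemma dd_scale:
  fixes G :: "'a::real_normed_vector \<Rightarrow> real"
  assumes "dd e G"
  shows "dd e (\<lambda>x. G (s *\<^sub>R x))" "dpd e (\<lambda>x. G (s *\<^sub>R x)) = (\<lambda>x. s * dpd e G (s *\<^sub>R x))"
proof -
  have h: "((\<lambda>t. G (s *\<^sub>R (p + t *\<^sub>R e))) has_vector_derivative s * dpd e G (s *\<^sub>R p)) (at 0)" for p
  proof -
    have 1: "((\<lambda>t. s * t) has_vector_derivative s) (at 0)"
      by (auto intro!: derivative_eq_intros simp: has_real_derivative_iff_has_vector_derivative[symmetric])
    have 2: "((\<lambda>t. G (s *\<^sub>R p + t *\<^sub>R e)) has_vector_derivative dpd e G (s *\<^sub>R p + (s * 0) *\<^sub>R e)) (at ((\<lambda>t. s * t) 0))"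
      using dd_vd[OF assms, of "s *\<^sub>R p" "s * 0"] by simp
    from vector_diff_chain_at[OF 1 2]
    show ?thesis by (simp add: o_def algebra_simps)
  qed
  show "dd e (\<lambda>x. G (s *\<^sub>R x))" unfolding dd_def using h differentiableI_vector by blast
  show "dpd e (\<lambda>x. G (s *\<^sub>R x)) = (\<lambda>x. s * dpd e G (s *\<^sub>R x))"
    using h by (auto intro!: dpd_eqI)
qed

lemma dd_ofreal:
  fixes G :: "'a::real_normed_vector \<Rightarrow> real"
  assumes "dd e G"
  shows "dd e (\<lambda>x. complex_of_real (G x))" "dpd e (\<lambda>x. complex_of_real (G x)) = (\<lambda>x. complex_of_real (dpd e G x))"
proof -
  have h: "((\<lambda>t. complex_of_real (G (p + t *\<^sub>R e))) has_vector_derivative complex_of_real (dpd e G p)) (at 0)" for p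
    using has_vector_derivative_of_real[OF dd_vd0[OF assms, of p, unfolded has_real_derivative_iff_has_vector_derivative[symmetric]]] .
  show "dd e (\<lambda>x. complex_of_real (G x))" unfolding dd_def using h differentiableI_vector by blast
  show "dpd e (\<lambda>x. complex_of_real (G x)) = (\<lambda>x. complex_of_real (dpd e G x))"
    using h by (auto intro!: dpd_eqI)
qed

lemma Dk_scale:
  fixes G :: "'a::real_normed_vector \<Rightarrow> real"
  assumes "sdir e G"
  shows "Dk e k (\<lambda>x. complex_of_real (G (s *\<^sub>R x))) = (\<lambda>x. complex_of_real (s ^ k * Dk e k G (s *\<^sub>R x)))"
    "dd e (Dk e k (\<lambda>x. complex_of_real (G (s *\<^sub>R x))))"
proof -
  have dG: "dd e (Dk e k G)" for k using assms sdir_def by blast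
  show eq: "Dk e k (\<lambda>x. complex_of_real (G (s *\<^sub>R x))) = (\<lambda>x. complex_of_real (s ^ k * Dk e k G (s *\<^sub>R x)))" for k
  proof (induction k)
    case (Suc k)
    have d1: "dd e (\<lambda>x. s ^ k * Dk e k G (s *\<^sub>R x))"
      using dd_scale(1)[OF dG[of k], of s] dd_cmult(1) by blast
    have "dpd e (\<lambda>x. s ^ k * Dk e k G (s *\<^sub>R x)) = (\<lambda>x. s ^ k * (s * dpd e (Dk e k G) (s *\<^sub>R x)))"
      using dd_cmult(2)[OF dd_scale(1)[OF dG[of k], of s]] dd_scale(2)[OF dG[of k], of s] by simp
    then show ?case
      unfolding Dk_Suc Suc dd_ofreal(2)[OF d1] by (simp add: algebra_simps)
  qed simp
  show "dd e (Dk e k (\<lambda>x. complex_of_real (G (s *\<^sub>R x))))"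
    unfolding eq by (intro dd_ofreal(1) dd_cmult(1) dd_scale(1) dG)
qed

lemma sdir_scale:
  fixes G :: "'a::real_normed_vector \<Rightarrow> real"
  shows "sdir e G \<Longrightarrow> sdir e (\<lambda>x. complex_of_real (G (s *\<^sub>R x)))"
  using Dk_scale(2) sdir_def by blast


definition Del :: "'a::real_normed_vector \<Rightarrow> ('a \<Rightarrow> complex) \<Rightarrow> 'a \<Rightarrow> complex" where
  "Del h g = (\<lambda>x. g x - g (x + h))"

definition CS :: "('a::real_normed_vector \<Rightarrow> complex) \<Rightarrow> real \<Rightarrow> bool" where
  "CS g R \<longleftrightarrow> continuous_on UNIV g \<and> (\<forall>x. R < norm x \<longrightarrow> g x = 0)"

lemma CS_Del: "CS (g::'a::real_normed_vector\<Rightarrow>complex) R \<Longrightarrow> CS (Del h g) (R + norm h)"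
  unfolding CS_def Del_def
proof safe
  assume c: "continuous_on UNIV g"
  show "continuous_on UNIV (\<lambda>x. g x - g (x + h))"
    by (intro continuous_intros continuous_on_compose2[OF c]) auto
next
  fix x :: 'a assume z: "\<forall>x. R < norm x \<longrightarrow> g x = 0" and x: "R + norm h < norm x"
  have "R < norm (x + h)" using x norm_triangle_ineq2[of x "-h"] by simp
  moreover have "R < norm x" using x norm_ge_zero[of h] by linarith
  ultimately show "g x - g (x + h) = 0" using z by simp
qed

lemma CS_shift: "CS (g::'a::real_normed_vector\<Rightarrow>complex) R \<Longrightarrow> CS (\<lambda>x. g (x + h)) (R + norm h)"
  unfolding CS_def
proof safe
  assume c: "continuous_on UNIV g"
  show "continuous_on UNIV (\<lambda>x. g (x + h))"
    by (intro continuous_intros continuous_on_compose2[OF c]) auto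
next
  fix x :: 'a assume z: "\<forall>x. R < norm x \<longrightarrow> g x = 0" and x: "R + norm h < norm x"
  have "R < norm (x + h)" using x norm_triangle_ineq2[of x "-h"] by simp
  then show "g (x + h) = 0" using z by simp
qed

lemma CS_mono: "CS g R \<Longrightarrow> R \<le> R' \<Longrightarrow> CS g R'"
  unfolding CS_def by auto

lemma CS_integrable:
  fixes g :: "'a::euclidean_space \<Rightarrow> complex"
  assumes "CS g R"
  shows "integrable lborel g"
proof -
  have i: "integrable lborel (\<lambda>x. indicator (cball 0 R) x *\<^sub>R g x)"
    using assms unfolding CS_def
    by (intro borel_integrable_compact compact_cball) (auto intro: continuous_on_subset)
  have "indicator (cball 0 R) x *\<^sub>R g x = g x" for x
    using assms unfolding CS_def by (auto simp: indicator_def not_le)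
  with i show ?thesis by simp
qed

lemma CS_exp: "CS g R \<Longrightarrow> CS (\<lambda>x. exp (\<i> * complex_of_real (w \<bullet> x)) * g x) R"
  unfolding CS_def by (auto intro!: continuous_intros)

lemma CS_meas:
  fixes g :: "'a::euclidean_space \<Rightarrow> complex"
  shows "CS g R \<Longrightarrow> g \<in> borel_measurable lborel"
  unfolding CS_def by (auto intro: borel_measurable_continuous_onI)

lemma lborel_shift_integral:
  fixes F :: "'a::euclidean_space \<Rightarrow> complex"
  assumes "F \<in> borel_measurable borel"
  shows "(\<integral>x. F (x + h) \<partial>lborel) = (\<integral>x. F x \<partial>lborel)"
proof -
  have "(\<integral>x. F x \<partial>lborel) = (\<integral>x. F x \<partial>distr lborel borel ((+) h))"
    by (simp add: lborel_distr_plus)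
  also have "\<dots> = (\<integral>x. F (h + x) \<partial>lborel)"
    by (rule integral_distr) (auto simp: assms)
  finally show ?thesis by (simp add: add.commute)
qed

lemma exp_shift_pi:
  fixes w h :: "'a::real_inner"
  assumes "w \<bullet> h = pi"
  shows "exp (\<i> * complex_of_real (w \<bullet> (x + h))) = - exp (\<i> * complex_of_real (w \<bullet> x))"
proof -
  have "exp (\<i> * complex_of_real (w \<bullet> (x + h))) = exp (\<i> * complex_of_real (w \<bullet> x)) * exp (\<i> * complex_of_real pi)"
    by (simp add: inner_add_right assms distrib_left exp_add)
  also have "exp (\<i> * complex_of_real pi) = -1"
    by (simp add: exp_eq_polar)
  finally show ?thesis by simp
qed

lemma int_Del:
  fixes g :: "'a::euclidean_space \<Rightarrow> complex"
  assumes "CS g R" "w \<bullet> h = pi"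
  shows "(\<integral>x. exp (\<i> * complex_of_real (w \<bullet> x)) * Del h g x \<partial>lborel) =
         2 * (\<integral>x. exp (\<i> * complex_of_real (w \<bullet> x)) * g x \<partial>lborel)"
proof -
  let ?E = "\<lambda>x. exp (\<i> * complex_of_real (w \<bullet> x))"
  have i1: "integrable lborel (\<lambda>x. ?E x * g x)" by (rule CS_integrable[OF CS_exp[OF assms(1)]])
  have i2: "integrable lborel (\<lambda>x. ?E x * g (x + h))" by (rule CS_integrable[OF CS_exp[OF CS_shift[OF assms(1)]]])
  have m: "(\<lambda>x. ?E x * g x) \<in> borel_measurable borel"
    using CS_meas[OF CS_exp[OF assms(1)]] by simp
  have "(\<integral>x. ?E x * g x \<partial>lborel) = (\<integral>x. ?E (x + h) * g (x + h) \<partial>lborel)"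
    using lborel_shift_integral[OF m, of h] by simp
  also have "\<dots> = (\<integral>x. - (?E x * g (x + h)) \<partial>lborel)"
    by (simp add: exp_shift_pi[OF assms(2)])
  also have "\<dots> = - (\<integral>x. ?E x * g (x + h) \<partial>lborel)" by (rule integral_minus)
  finally have sh: "(\<integral>x. ?E x * g (x + h) \<partial>lborel) = - (\<integral>x. ?E x * g x \<partial>lborel)" by simp
  have "(\<integral>x. ?E x * Del h g x \<partial>lborel) = (\<integral>x. ?E x * g x - ?E x * g (x + h) \<partial>lborel)"
    by (simp add: Del_def algebra_simps)
  also have "\<dots> = (\<integral>x. ?E x * g x \<partial>lborel) - (\<integral>x. ?E x * g (x + h) \<partial>lborel)"
    by (rule Bochner_Integration.integral_diff[OF i1 i2])
  finally show ?thesis using sh by simp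
qed

lemma int_Del_iter:
  fixes g :: "'a::euclidean_space \<Rightarrow> complex"
  assumes "CS g R" "w \<bullet> h = pi"
  shows "(\<integral>x. exp (\<i> * complex_of_real (w \<bullet> x)) * (Del h ^^ m) g x \<partial>lborel) =
         2 ^ m * (\<integral>x. exp (\<i> * complex_of_real (w \<bullet> x)) * g x \<partial>lborel)"
  using assms(1)
proof (induction m arbitrary: g R)
  case (Suc m)
  have "(Del h ^^ Suc m) g = (Del h ^^ m) (Del h g)" by (simp only: funpow_Suc_right o_apply)
  then show ?case using Suc.IH[OF CS_Del[OF Suc.prems]] int_Del[OF Suc.prems assms(2)] by simp
qed simp

lemma CS_Del_iter: "CS g R \<Longrightarrow> CS ((Del h ^^ m) g) (R + real m * norm h)"
proof (induction m arbitrary: g R)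
  case (Suc m)
  have "(Del h ^^ Suc m) g = (Del h ^^ m) (Del h g)" by (simp only: funpow_Suc_right o_apply)
  then show ?case using Suc.IH[OF CS_Del[OF Suc.prems]] by (simp add: algebra_simps)
qed simp

lemma Dk_Del:
  assumes "sdir e g"
  shows "Dk e k (Del h g) = Del h (Dk e k g)" "sdir e (Del h g)"
proof -
  show "Dk e k (Del h g) = Del h (Dk e k g)"
    unfolding Del_def using Dk_diff[OF assms sdir_shift[OF assms]] Dk_shift[OF assms] by simp
  show "sdir e (Del h g)" unfolding Del_def by (intro sdir_diff sdir_shift assms)
qed

lemma Del_iter_bound:
  assumes "sdir e g" "norm e = 1" "\<And>p. norm (Dk e m g p) \<le> B"
  shows "norm ((Del (s *\<^sub>R e) ^^ m) g p) \<le> \<bar>s\<bar> ^ m * B"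
  using assms(1,3)
proof (induction m arbitrary: g B)
  case 0 then show ?case by simp
next
  case (Suc m)
  have ddm: "dd e (Dk e m g)" using Suc.prems(1) sdir_def by blast
  have "norm (Dk e m (Del (s *\<^sub>R e) g) p) \<le> B * \<bar>s\<bar>" for p
  proof -
    have "Dk e m (Del (s *\<^sub>R e) g) = Del (s *\<^sub>R e) (Dk e m g)" by (rule Dk_Del(1)[OF Suc.prems(1)])
    moreover have "norm (Dk e m g p - Dk e m g (p + s *\<^sub>R e)) \<le> B * \<bar>s\<bar>"
      by (rule mvt_dir[OF ddm assms(2)]) (use Suc.prems(2) in \<open>simp add: Dk_Suc\<close>)
    ultimately show ?thesis by (simp add: Del_def)
  qed
  from Suc.IH[OF Dk_Del(2)[OF Suc.prems(1)] this]
  have "norm ((Del (s *\<^sub>R e) ^^ m) (Del (s *\<^sub>R e) g) p) \<le> \<bar>s\<bar> ^ Suc m * B" by (simp add: algebra_simps)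
  moreover have "(Del (s *\<^sub>R e) ^^ Suc m) g = (Del (s *\<^sub>R e) ^^ m) (Del (s *\<^sub>R e) g)"
    by (simp only: funpow_Suc_right o_apply)
  ultimately show ?case by simp
qed

lemma L0:
  fixes g :: "'a::euclidean_space \<Rightarrow> complex"
  assumes "CS g R" "\<And>x. norm (g x) \<le> B"
  shows "norm (\<integral>x. exp (\<i> * complex_of_real (w \<bullet> x)) * g x \<partial>lborel) \<le> B * measure lborel (cball (0::'a) R)"
proof -
  let ?E = "\<lambda>x. exp (\<i> * complex_of_real (w \<bullet> x))"
  have i1: "integrable lborel (\<lambda>x. ?E x * g x)" by (rule CS_integrable[OF CS_exp[OF assms(1)]])
  have fin: "emeasure lborel (cball (0::'a) R) < \<infinity>" by (rule emeasure_compact_finite) simp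
  have i2: "integrable lborel (\<lambda>x. B * indicator (cball (0::'a) R) x)"
    using fin by (intro integrable_mult_right integrable_real_indicator) auto
  have "norm (\<integral>x. ?E x * g x \<partial>lborel) \<le> (\<integral>x. norm (?E x * g x) \<partial>lborel)"
    by (rule integral_norm_bound)
  also have "\<dots> \<le> (\<integral>x. B * indicator (cball (0::'a) R) x \<partial>lborel)"
  proof (rule integral_mono[OF integrable_norm[OF i1] i2])
    fix x :: 'a
    show "norm (?E x * g x) \<le> B * indicator (cball 0 R) x"
      using assms unfolding CS_def by (cases "x \<in> cball 0 R") (auto simp: norm_mult not_le)
  qed
  also have "\<dots> = B * measure lborel (cball (0::'a) R)"
    by simp
  finally show ?thesis by simp
qed

lemma FD:
  fixes c :: "'a::euclidean_space \<Rightarrow> complex"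
  assumes cs: "CS c R" and sd: "sdir e c" and ne: "norm e = 1"
    and bnd: "\<And>p. norm (Dk e m c p) \<le> B" and we: "w \<bullet> e \<noteq> 0"
  shows "norm (\<integral>x. exp (\<i> * complex_of_real (w \<bullet> x)) * c x \<partial>lborel)
      \<le> (pi / \<bar>w \<bullet> e\<bar>) ^ m * B * measure lborel (cball (0::'a) (R + real m * (pi / \<bar>w \<bullet> e\<bar>)))"
proof -
  define s where "s = pi / (w \<bullet> e)"
  define h where "h = s *\<^sub>R e"
  have wh: "w \<bullet> h = pi" using we by (simp add: h_def s_def)
  have nh: "norm h = pi / \<bar>w \<bullet> e\<bar>" using ne by (simp add: h_def s_def)
  have as: "\<bar>s\<bar> = pi / \<bar>w \<bullet> e\<bar>" by (simp add: s_def)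
  let ?E = "\<lambda>x. exp (\<i> * complex_of_real (w \<bullet> x))"
  define M where "M = measure lborel (cball (0::'a) (R + real m * norm h))"
  define I where "I = (\<integral>x. ?E x * c x \<partial>lborel)"
  have "norm (\<integral>x. ?E x * (Del h ^^ m) c x \<partial>lborel) \<le> (\<bar>s\<bar> ^ m * B) * M"
    unfolding M_def by (rule L0[OF CS_Del_iter[OF cs]]) (unfold h_def, rule Del_iter_bound[OF sd ne bnd])
  then have A: "2 ^ m * norm I \<le> (\<bar>s\<bar> ^ m * B) * M"
    unfolding I_def by (simp add: int_Del_iter[OF cs wh] norm_mult norm_power)
  moreover have "norm I \<le> 2 ^ m * norm I"
    by (simp add: mult_le_cancel_right1)
  ultimately have "norm I \<le> (\<bar>s\<bar> ^ m * B) * M" by linarith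
  then show ?thesis unfolding I_def M_def nh as .
qed


lemma absaux: "(\<bar>p - q\<bar> * 2 \<le> s) = (q - s / 2 \<le> (p::real) \<and> p \<le> q + s / 2)"
  by (cases "p \<le> q") (auto simp: abs_if field_simps)

lemma cube_cbox:
  fixes c :: "'a::euclidean_space"
  shows "cube c s = cbox (c - (s/2) *\<^sub>R One) (c + (s/2) *\<^sub>R One)"
proof -
  have "(\<bar>(x - c) \<bullet> b\<bar> \<le> s / 2) = ((c - (s/2) *\<^sub>R One) \<bullet> b \<le> x \<bullet> b \<and> x \<bullet> b \<le> (c + (s/2) *\<^sub>R One) \<bullet> b)"
    if "b \<in> Basis" for x b
    using that by (simp add: inner_diff_left inner_add_left absaux)
  then show ?thesis unfolding cube_def set_eq_iff mem_box by auto
qed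

lemma measure_cube:
  fixes c :: "'a::euclidean_space"
  assumes "0 < s"
  shows "measure lborel (cube c s) = s ^ DIM('a)"
  using assms unfolding cube_cbox measure_lborel_cbox_eq
  by (simp add: inner_diff_left inner_add_left algebra_simps)

lemma closed_cube: "closed (cube (c::'a::euclidean_space) s)"
  unfolding cube_cbox by (rule closed_cbox)

lemma ind_cube: "indicator (cube (c::'a::euclidean_space) s) \<in> borel_measurable borel"
  by (intro borel_measurable_indicator borel_closed closed_cube)

lemma maximal_cube:
  fixes u :: "'a::euclidean_space \<Rightarrow> complex"
  assumes "0 < s" "x0 \<in> cube c s"
  shows "(\<integral>\<^sup>+ y. ennreal (norm (u y)) * indicator (cube c s) y \<partial>lborel) \<le> ennreal (s ^ DIM('a)) * maximal_fn u x0"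
proof -
  let ?Q = "cube c s"
  have mQ: "measure lborel ?Q = s ^ DIM('a)" by (rule measure_cube[OF assms(1)])
  have pos: "0 < s ^ DIM('a)" using assms by simp
  have "ennreal (1 / measure lborel ?Q) * (\<integral>\<^sup>+ y\<in>?Q. ennreal (norm (u y)) \<partial>lborel) \<le> maximal_fn u x0"
    unfolding maximal_fn_def by (rule SUP_upper) (use assms in blast)
  then have "ennreal (s ^ DIM('a)) * (ennreal (1 / s ^ DIM('a)) * (\<integral>\<^sup>+ y\<in>?Q. ennreal (norm (u y)) \<partial>lborel))
      \<le> ennreal (s ^ DIM('a)) * maximal_fn u x0"
    unfolding mQ by (rule mult_left_mono) simp
  moreover have "ennreal (s ^ DIM('a)) * ennreal (1 / s ^ DIM('a)) = 1"
    using pos assms(1) by (simp add: ennreal_mult[symmetric] del: ennreal_mult)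
  ultimately show ?thesis by (simp add: mult.assoc[symmetric])
qed

definition wt :: "'a::real_normed_vector \<Rightarrow> nat \<Rightarrow> 'a \<Rightarrow> real" where
  "wt x0 M y = 1 / (max 1 (norm (y - x0))) ^ M"

lemma wt_pos: "0 < wt x0 M y"
  unfolding wt_def by simp

lemma wt_le1: "wt x0 M y \<le> 1"
  unfolding wt_def by (simp add: one_le_power)

lemma wt_cover:
  fixes x0 y :: "'a::euclidean_space"
  shows "\<exists>k. y \<in> cube x0 (2 ^ (k+1)) \<and> wt x0 M y \<le> 2 ^ M * (1/2) ^ (k * M)"
proof -
  let ?r = "norm (y - x0)"
  have ex: "\<exists>k::nat. ?r \<le> 2 ^ k"
    using real_arch_pow[of 2 ?r] by (auto intro: less_imp_le)
  define k where "k = (LEAST k::nat. ?r \<le> 2 ^ k)"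
  have rk: "?r \<le> 2 ^ k" unfolding k_def by (rule LeastI_ex[OF ex])
  have inQ: "y \<in> cube x0 (2 ^ (k+1))"
    unfolding cube_def
  proof safe
    fix b :: 'a assume "b \<in> Basis"
    then have "\<bar>(y - x0) \<bullet> b\<bar> \<le> ?r" by (rule Basis_le_norm)
    then show "\<bar>(y - x0) \<bullet> b\<bar> \<le> 2 ^ (k + 1) / 2" using rk by simp
  qed
  have w: "wt x0 M y \<le> 2 ^ M * (1/2) ^ (k * M)"
  proof (cases k)
    case 0
    then show ?thesis proof -
      have "(1::real) \<le> 2 ^ M" by simp
      then have "wt x0 M y \<le> 2 ^ M" using wt_le1[of x0 M y] by linarith
      then show ?thesis using 0 by simp
    qed
  next
    case (Suc k')
    have "\<not> ?r \<le> 2 ^ k'"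
    proof
      assume "?r \<le> 2 ^ k'"
      then have "k \<le> k'" unfolding k_def by (rule Least_le)
      then show False using Suc by simp
    qed
    then have gt: "2 ^ k' < max 1 ?r" by simp
    have "wt x0 M y = 1 / (max 1 ?r) ^ M" by (simp add: wt_def)
    also have "\<dots> \<le> 1 / (2 ^ k') ^ M"
      using gt by (intro divide_left_mono power_mono) auto
    also have "\<dots> = 2 ^ M * (1/2) ^ (k * M)"
      using Suc by (simp add: power_mult[symmetric] power_divide power_add mult.commute field_simps)
    finally show ?thesis .
  qed
  show ?thesis using inQ w by blast
qed

lemma MX:
  fixes u :: "'a::euclidean_space \<Rightarrow> complex"
  assumes um: "u \<in> borel_measurable lborel"
  shows "(\<integral>\<^sup>+ y. ennreal (norm (u y) * wt x0 (DIM('a) + 1) y) \<partial>lborel)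
     \<le> ennreal (2 ^ (2 * DIM('a) + 2)) * maximal_fn u x0"
proof -
  define n where "n = DIM('a)"
  define M where "M = n + 1"
  define Q where "Q k = cube x0 (2 ^ (k+1))" for k :: nat
  define a where "a k = (2::real) ^ M * (1/2) ^ (k * M)" for k :: nat
  define T where "T k y = ennreal (norm (u y)) * ennreal (a k) * indicator (Q k) y" for k y
  have a0: "0 \<le> a k" for k by (simp add: a_def)
  have pw: "ennreal (norm (u y) * wt x0 M y) \<le> (\<Sum>k. T k y)" for y
  proof -
    obtain k where k: "y \<in> Q k" "wt x0 M y \<le> a k"
      using wt_cover[of y x0 M] unfolding Q_def a_def by blast
    have "ennreal (norm (u y) * wt x0 M y) \<le> ennreal (norm (u y) * a k)"
      using k(2) by (intro ennreal_leI mult_left_mono) auto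
    also have "\<dots> = T k y" using k(1) a0[of k] by (simp add: T_def ennreal_mult)
    also have "\<dots> \<le> (\<Sum>k. T k y)"
      using sum_le_suminf[of "\<lambda>k. T k y" "{k}"] by (simp add: summableI)
    finally show ?thesis .
  qed
  have meas: "T k \<in> borel_measurable lborel" for k
    unfolding T_def Q_def using um ind_cube
    by (intro borel_measurable_times_ennreal) auto
  have tk: "(\<integral>\<^sup>+ y. T k y \<partial>lborel) \<le> ennreal (2 ^ (2 * n + 1) * (1/2) ^ k) * maximal_fn u x0" for k
  proof -
    have "(\<integral>\<^sup>+ y. T k y \<partial>lborel) = ennreal (a k) * (\<integral>\<^sup>+ y. ennreal (norm (u y)) * indicator (Q k) y \<partial>lborel)"
      unfolding T_def using um
      by (subst nn_integral_cmult[symmetric]) (auto simp: ac_simps Q_def intro!: borel_measurable_times_ennreal ind_cube)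
    also have "\<dots> \<le> ennreal (a k) * (ennreal ((2 ^ (k+1)) ^ n) * maximal_fn u x0)"
      unfolding Q_def n_def by (intro mult_left_mono maximal_cube) (auto simp: cube_def)
    also have "\<dots> = ennreal (a k * (2 ^ (k+1)) ^ n) * maximal_fn u x0"
      using a0[of k] by (simp add: ennreal_mult mult.assoc)
    also have "a k * (2 ^ (k+1)) ^ n = 2 ^ (2 * n + 1) * (1/2) ^ k"
    proof -
      have e1: "(1/2::real) ^ (k * M) = (1/2) ^ (k*n) * (1/2) ^ k"
        unfolding M_def by (simp add: power_add algebra_simps)
      have e2: "(2::real) ^ ((k+1) * n) = 2 ^ (k*n) * 2 ^ n"
        by (simp add: power_add algebra_simps)
      have e3: "(1/2::real) ^ (k*n) * 2 ^ (k*n) = 1" by (simp add: power_mult_distrib[symmetric])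
      have e4: "(2::real) ^ M * 2 ^ n = 2 ^ (2 * n + 1)"
        unfolding M_def by (simp add: power_add[symmetric])
      have "a k * (2 ^ (k+1)) ^ n = 2 ^ M * ((1/2) ^ (k*n) * (1/2) ^ k) * (2 ^ (k*n) * 2 ^ n)"
        unfolding a_def e1 by (simp add: power_mult[symmetric] e2 mult.commute)
      also have "\<dots> = ((1/2::real) ^ (k*n) * 2 ^ (k*n)) * (2 ^ M * 2 ^ n) * (1/2) ^ k"
        by (simp only: mult_ac)
      finally show ?thesis unfolding e3 e4 by simp
    qed
    finally show ?thesis by simp
  qed
  have "(\<integral>\<^sup>+ y. ennreal (norm (u y) * wt x0 M y) \<partial>lborel) \<le> (\<integral>\<^sup>+ y. (\<Sum>k. T k y) \<partial>lborel)"
    by (rule nn_integral_mono) (rule pw)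
  also have "\<dots> = (\<Sum>k. \<integral>\<^sup>+ y. T k y \<partial>lborel)"
    by (rule nn_integral_suminf[OF meas])
  also have "\<dots> \<le> (\<Sum>k. ennreal (2 ^ (2 * n + 1) * (1/2) ^ k) * maximal_fn u x0)"
    by (intro suminf_le tk summableI)
  also have "\<dots> = (\<Sum>k. ennreal (2 ^ (2 * n + 1) * (1/2) ^ k)) * maximal_fn u x0"
    by simp
  also have "(\<Sum>k. ennreal (2 ^ (2 * n + 1) * (1/2) ^ k)) = ennreal (2 ^ (2 * n + 1) * 2)"
  proof (rule suminf_ennreal_eq)
    show "(\<lambda>k. 2 ^ (2 * n + 1) * (1 / 2) ^ k) sums (2 ^ (2 * n + 1) * 2::real)"
      using sums_mult[OF geometric_sums[of "1/2::real"], of "2 ^ (2 * n + 1)"] by simp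
  qed simp
  finally show ?thesis by (simp add: M_def n_def power_add mult_ac)
qed


lemma fin_unif:
  assumes "finite A" "\<forall>a\<in>A. \<exists>M::real. Q a M" "\<And>a M M'. Q a M \<Longrightarrow> M \<le> M' \<Longrightarrow> Q a M'"
  shows "\<exists>M\<ge>0. \<forall>a\<in>A. Q a M"
proof -
  obtain Mf where Mf: "\<forall>a\<in>A. Q a (Mf a)" using bchoice[OF assms(2)] by blast
  have "Q a (\<Sum>a\<in>A. \<bar>Mf a\<bar>)" if "a \<in> A" for a
  proof (rule assms(3)[OF Mf[rule_format, OF that]])
    have "Mf a \<le> \<bar>Mf a\<bar>" by simp
    also have "\<dots> \<le> (\<Sum>a\<in>A. \<bar>Mf a\<bar>)"
      by (rule member_le_sum[OF that _ assms(1)]) simp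
    finally show "Mf a \<le> (\<Sum>a\<in>A. \<bar>Mf a\<bar>)" .
  qed
  moreover have "0 \<le> (\<Sum>a\<in>A. \<bar>Mf a\<bar>)" by (simp add: sum_nonneg)
  ultimately show ?thesis by blast
qed

lemma smooth_sdir:
  fixes f :: "'a::euclidean_space \<Rightarrow> 'b::real_normed_vector"
  assumes "smooth_fn f" "e \<in> Basis"
  shows "sdir e f" "continuous_on UNIV (Dk e k f)"
proof -
  have s: "set (replicate k e) \<subseteq> Basis" for k using assms(2) by auto
  show "sdir e f" unfolding sdir_def dd_def Dk_def
    using assms s unfolding smooth_fn_def by blast
  show "continuous_on UNIV (Dk e k f)" unfolding Dk_def
    using assms s unfolding smooth_fn_def by blast
qed

lemma Dk_zero_outside:
  fixes f :: "'a::real_normed_vector \<Rightarrow> 'b::real_normed_vector"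
  assumes "open U" "\<And>x. x \<in> U \<Longrightarrow> f x = 0" "x \<in> U"
  shows "Dk e k f x = 0"
  using assms(3)
proof (induction k arbitrary: x)
  case 0 then show ?case using assms(2) by simp
next
  case (Suc k)
  have op: "open ((\<lambda>t::real. x + t *\<^sub>R e) -` U)"
    by (intro open_vimage assms(1) continuous_intros)
  have "((\<lambda>t::real. Dk e k f (x + t *\<^sub>R e)) has_vector_derivative 0) (at 0)"
    by (rule has_vector_derivative_transform_within_open[OF has_vector_derivative_const op])
       (use Suc in auto)
  then show ?case unfolding Dk_Suc by (rule dpd_eqI)
qed

definition Ann :: "real \<Rightarrow> nat \<Rightarrow> 'a::real_normed_vector set" where
  "Ann C0 j = {\<xi>. 2 ^ j / C0 \<le> norm \<xi> \<and> norm \<xi> \<le> 2 * C0 * 2 ^ j}"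

definition Ps :: "('a::real_normed_vector \<Rightarrow> real) \<Rightarrow> nat \<Rightarrow> 'a \<Rightarrow> complex" where
  "Ps psi j = (\<lambda>\<xi>. complex_of_real (psi ((2 powr - real j) *\<^sub>R \<xi>)))"

lemma two_powr_neg: "(2::real) powr - real j = inverse (2 ^ j)"
  by (simp add: powr_minus powr_realpow)

lemma psi_facts:
  fixes psi psim1 :: "'a::euclidean_space \<Rightarrow> real"
  assumes LP: "LP_data C0 psim1 psi"
  shows "\<exists>M\<ge>0. \<forall>e\<in>Basis. \<forall>\<xi> j. norm (Dk e k (Ps psi j) \<xi>) \<le> M"
    and "e \<in> Basis \<Longrightarrow> sdir e (Ps psi j)"
    and "Dk e k (Ps psi j) \<xi> \<noteq> 0 \<Longrightarrow> \<xi> \<in> Ann C0 j"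
    and "continuous_on UNIV (Ps psi j)"
proof -
  have C0: "C0 > 1" and sm: "smooth_fn psi"
    and supp: "closure {\<xi>. psi \<xi> \<noteq> 0} \<subseteq> {\<xi>. inverse C0 \<le> norm \<xi> \<and> norm \<xi> \<le> 2 * C0}"
    using LP unfolding LP_data_def by auto
  let ?K = "closure {\<xi>. psi \<xi> \<noteq> 0}"
  have zero: "Dk e k psi \<xi> = 0" if "\<xi> \<notin> ?K" for e k \<xi>
    by (rule Dk_zero_outside[of "- ?K"]) (use that closure_subset[of "{\<xi>. psi \<xi> \<noteq> 0}"] in blast)+
  have cK: "compact ?K"
    unfolding compact_eq_bounded_closed
  proof
    show "bounded ?K" by (rule bounded_subset[OF bounded_cball[of 0 "2*C0"]]) (use supp in auto)
  qed simp
  have bd: "\<exists>M. \<forall>\<xi>. \<bar>Dk e k psi \<xi>\<bar> \<le> M" if "e \<in> Basis" for e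
  proof -
    have "bounded (Dk e k psi ` ?K)"
      by (intro compact_imp_bounded compact_continuous_image cK continuous_on_subset[OF smooth_sdir(2)[OF sm that]]) auto
    then obtain M where M: "\<And>\<xi>. \<xi> \<in> ?K \<Longrightarrow> \<bar>Dk e k psi \<xi>\<bar> \<le> M"
      unfolding bounded_iff by auto
    have "\<bar>Dk e k psi \<xi>\<bar> \<le> \<bar>M\<bar>" for \<xi>
      using M[of \<xi>] zero[of \<xi> e k] by (cases "\<xi> \<in> ?K") auto
    then show ?thesis by blast
  qed
  have s01: "0 < (2::real) powr - real j" "(2::real) powr - real j \<le> 1" for j
    by (auto simp: two_powr_neg inverse_le_1_iff)
  have Dk_Ps: "Dk e k (Ps psi j) = (\<lambda>\<xi>. complex_of_real ((2 powr - real j) ^ k * Dk e k psi ((2 powr - real j) *\<^sub>R \<xi>)))"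
    if "e \<in> Basis" for e j
    unfolding Ps_def by (rule Dk_scale(1)[OF smooth_sdir(1)[OF sm that]])
  show "\<exists>M\<ge>0. \<forall>e\<in>Basis. \<forall>\<xi> j. norm (Dk e k (Ps psi j) \<xi>) \<le> M"
  proof (rule fin_unif)
    show "\<forall>e\<in>Basis. \<exists>M. \<forall>\<xi> j. norm (Dk e k (Ps psi j) \<xi>) \<le> M"
    proof
      fix e :: 'a assume e: "e \<in> Basis"
      obtain M where M: "\<And>\<xi>. \<bar>Dk e k psi \<xi>\<bar> \<le> M" using bd[OF e] by blast
      have "norm (Dk e k (Ps psi j) \<xi>) \<le> M" for \<xi> j
      proof -
        have "norm (Dk e k (Ps psi j) \<xi>) = (2 powr - real j) ^ k * \<bar>Dk e k psi ((2 powr - real j) *\<^sub>R \<xi>)\<bar>"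
          using s01[of j] by (simp only: Dk_Ps[OF e] norm_of_real abs_mult power_abs)
        also have "\<dots> \<le> 1 * M"
          using s01[of j] M by (intro mult_mono power_le_one) (auto intro: order_trans[OF abs_ge_zero])
        finally show ?thesis by simp
      qed
      then show "\<exists>M. \<forall>\<xi> j. norm (Dk e k (Ps psi j) \<xi>) \<le> M" by blast
    qed
  next
    fix e :: 'a and M M' :: real
    assume a1: "\<forall>\<xi> j. norm (Dk e k (Ps psi j) \<xi>) \<le> M" and a2: "M \<le> M'"
    show "\<forall>\<xi> j. norm (Dk e k (Ps psi j) \<xi>) \<le> M'"
    proof (intro allI)
      fix \<xi> j
      have "norm (Dk e k (Ps psi j) \<xi>) \<le> M" using a1 by blast
      then show "norm (Dk e k (Ps psi j) \<xi>) \<le> M'" using a2 by linarith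
    qed
  qed simp
  show "e \<in> Basis \<Longrightarrow> sdir e (Ps psi j)"
    unfolding Ps_def by (intro sdir_scale smooth_sdir(1)[OF sm])
  show "continuous_on UNIV (Ps psi j)"
  proof -
    have "continuous_on UNIV (dpds [] psi)"
      using sm[unfolded smooth_fn_def, rule_format, of "[]"] by simp
    then have "continuous_on UNIV psi" by simp
    then have "continuous_on UNIV (\<lambda>\<xi>. psi ((2 powr - real j) *\<^sub>R \<xi>))"
      by (rule continuous_on_compose2) (auto intro: continuous_on_scaleR continuous_on_const continuous_on_id)
    then show ?thesis unfolding Ps_def by (rule continuous_on_of_real)
  qed
  assume nz: "Dk e k (Ps psi j) \<xi> \<noteq> 0"
  let ?s = "(2::real) powr - real j"
  have "?s *\<^sub>R \<xi> \<in> ?K"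
  proof (rule ccontr)
    assume nK: "?s *\<^sub>R \<xi> \<notin> ?K"
    have "Dk e k (Ps psi j) \<xi> = 0"
    proof (rule Dk_zero_outside[of "(\<lambda>x. ?s *\<^sub>R x) -` (- ?K)"])
      show "open ((\<lambda>x. ?s *\<^sub>R x) -` (- ?K))"
        by (rule open_vimage) (auto intro: continuous_on_scaleR continuous_on_const continuous_on_id)
      show "Ps psi j x = 0" if "x \<in> (\<lambda>x. ?s *\<^sub>R x) -` (- ?K)" for x
        using that closure_subset[of "{\<xi>. psi \<xi> \<noteq> 0}"] unfolding Ps_def by auto
    qed (use nK in auto)
    with nz show False by simp
  qed
  then have "inverse C0 \<le> ?s * norm \<xi>" "?s * norm \<xi> \<le> 2 * C0"
    using supp s01[of j] by auto
  then show "\<xi> \<in> Ann C0 j"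
    using C0 unfolding Ann_def two_powr_neg by (auto simp: field_simps)
qed


lemma psi_unif:
  fixes psi psim1 :: "'a::euclidean_space \<Rightarrow> real"
  assumes LP: "LP_data C0 psim1 psi"
  shows "\<exists>M\<ge>0. \<forall>i\<in>{..m}. \<forall>e\<in>Basis. \<forall>\<xi> j. norm (Dk e i (Ps psi j) \<xi>) \<le> M"
proof (rule fin_unif)
  show "\<forall>i\<in>{..m}. \<exists>M. \<forall>e\<in>Basis. \<forall>\<xi> j. norm (Dk e i (Ps psi j) \<xi>) \<le> M"
    using psi_facts(1)[OF LP] by blast
next
  fix i and M M' :: real
  assume a1: "\<forall>e\<in>Basis. \<forall>\<xi> j. norm (Dk e i (Ps psi j) \<xi>) \<le> M" and a2: "M \<le> M'"
  show "\<forall>e\<in>Basis. \<forall>\<xi> j. norm (Dk e i (Ps psi j) \<xi>) \<le> M'"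
  proof (intro ballI allI)
    fix e :: 'a and \<xi> :: 'a and j
    assume "e \<in> Basis"
    then have "norm (Dk e i (Ps psi j) \<xi>) \<le> M" using a1 by blast
    then show "norm (Dk e i (Ps psi j) \<xi>) \<le> M'" using a2 by linarith
  qed
qed simp

lemma cut_bound:
  fixes psi psim1 :: "'a::euclidean_space \<Rightarrow> real" and f :: "'a \<Rightarrow> complex"
  assumes LP: "LP_data C0 psim1 psi" and e: "e \<in> Basis" and sf: "sdir e f"
    and Mp: "\<forall>i\<in>{..m}. \<forall>e\<in>Basis. \<forall>\<xi> j. norm (Dk e i (Ps psi j) \<xi>) \<le> Mp"
    and F: "\<And>i \<xi>. i \<le> m \<Longrightarrow> \<xi> \<in> Ann C0 j \<Longrightarrow> norm (Dk e i f \<xi>) \<le> F" and F0: "0 \<le> F"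
  shows "norm (Dk e m (\<lambda>\<xi>. f \<xi> * Ps psi j \<xi>) \<xi>) \<le> F * (2 ^ m * Mp)"
proof -
  have sp: "sdir e (Ps psi j)" by (rule psi_facts(2)[OF LP e])
  show ?thesis
  proof (cases "\<xi> \<in> Ann C0 j")
    case True
    have "norm (Dk e m (\<lambda>\<xi>. f \<xi> * Ps psi j \<xi>) \<xi>) \<le> (\<Sum>i = 0..m. real (m choose i) * F * Mp)"
      by (rule leib_bound[OF sf sp]) (use F True Mp e in auto)
    also have "\<dots> = F * Mp * (\<Sum>i = 0..m. real (m choose i))"
      by (simp add: sum_distrib_left algebra_simps)
    also have "(\<Sum>i = 0..m. real (m choose i)) = 2 ^ m"
      using choose_row_sum[of m] by (simp add: atMost_atLeast0 flip: of_nat_sum)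
    finally show ?thesis by (simp add: algebra_simps)
  next
    case False
    have z: "Dk e i (Ps psi j) \<xi> = 0" for i using psi_facts(3)[OF LP] False by blast
    have "norm (Dk e m (\<lambda>\<xi>. f \<xi> * Ps psi j \<xi>) \<xi>) \<le> (\<Sum>i = 0..m. real (m choose i) * norm (Dk e i f \<xi>) * 0)"
      by (rule leib_bound[OF sf sp]) (use z in auto)
    also have "\<dots> \<le> F * (2 ^ m * Mp)"
      using F0 Mp e by simp (meson mult_nonneg_nonneg norm_ge_zero order_trans zero_le_numeral zero_le_power atMost_iff order_refl)
    finally show ?thesis .
  qed
qed

lemma pow_diff_le:
  fixes a b :: real
  assumes "\<bar>a\<bar> \<le> 1" "\<bar>b\<bar> \<le> 1"
  shows "\<bar>a ^ r - b ^ r\<bar> \<le> real r * \<bar>a - b\<bar>"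
proof (induction r)
  case (Suc r)
  have "\<bar>a ^ Suc r - b ^ Suc r\<bar> = \<bar>a * (a ^ r - b ^ r) + b ^ r * (a - b)\<bar>" by (simp add: algebra_simps)
  also have "\<dots> \<le> \<bar>a\<bar> * \<bar>a ^ r - b ^ r\<bar> + \<bar>b\<bar> ^ r * \<bar>a - b\<bar>"
    by (metis abs_mult abs_triangle_ineq power_abs)
  also have "\<dots> \<le> 1 * (real r * \<bar>a - b\<bar>) + 1 * \<bar>a - b\<bar>"
    using assms Suc by (intro add_mono mult_mono power_le_one) auto
  finally show ?case by (simp add: algebra_simps)
qed simp

lemma exp_i_minus_1: "norm (exp (\<i> * complex_of_real t) - 1) \<le> \<bar>t\<bar>"
proof -
  have dx: "dpd 1 (\<lambda>x::real. exp (\<i> * complex_of_real x)) = (\<lambda>x. \<i> * exp (\<i> * complex_of_real x))"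
    using dd_exp(2)[of "1::real" "1::real"] by simp
  have "norm ((\<lambda>x::real. exp (\<i> * complex_of_real (1 \<bullet> x))) 0 - (\<lambda>x::real. exp (\<i> * complex_of_real (1 \<bullet> x))) (0 + t *\<^sub>R 1)) \<le> 1 * \<bar>t\<bar>"
    by (rule mvt_dir[OF dd_exp(1)]) (auto simp: dx norm_mult)
  then show ?thesis by (simp add: norm_minus_commute)
qed

lemma E_bounds:
  fixes v u \<xi> :: "'a::real_inner"
  assumes "\<bar>u \<bullet> e\<bar> \<le> 1" "\<bar>v \<bullet> e\<bar> \<le> 1"
  shows "norm (Dk e r (\<lambda>\<xi>. exp (\<i> * complex_of_real (u \<bullet> \<xi>))) \<xi>) \<le> 1"
    "norm (Dk e r (\<lambda>\<xi>. exp (\<i> * complex_of_real (v \<bullet> \<xi>)) - exp (\<i> * complex_of_real (u \<bullet> \<xi>))) \<xi>)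
       \<le> real r * \<bar>v \<bullet> e - u \<bullet> e\<bar> + norm (v - u) * norm \<xi>"
proof -
  show "norm (Dk e r (\<lambda>\<xi>. exp (\<i> * complex_of_real (u \<bullet> \<xi>))) \<xi>) \<le> 1"
    using assms by (simp add: Dk_exp norm_mult norm_power power_le_one)
  let ?a = "v \<bullet> e" and ?b = "u \<bullet> e"
  let ?Ev = "exp (\<i> * complex_of_real (v \<bullet> \<xi>))" and ?Eu = "exp (\<i> * complex_of_real (u \<bullet> \<xi>))"
  have "Dk e r (\<lambda>\<xi>. exp (\<i> * complex_of_real (v \<bullet> \<xi>)) - exp (\<i> * complex_of_real (u \<bullet> \<xi>))) \<xi>
      = (\<i> * complex_of_real ?a) ^ r * ?Ev - (\<i> * complex_of_real ?b) ^ r * ?Eu"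
    by (simp add: Dk_diff[OF sdir_exp sdir_exp] Dk_exp)
  also have "\<dots> = \<i> ^ r * (complex_of_real (?a ^ r - ?b ^ r) * ?Ev + complex_of_real (?b ^ r) * (?Ev - ?Eu))"
    by (simp add: power_mult_distrib algebra_simps)
  finally have eq: "Dk e r (\<lambda>\<xi>. exp (\<i> * complex_of_real (v \<bullet> \<xi>)) - exp (\<i> * complex_of_real (u \<bullet> \<xi>))) \<xi>
      = \<i> ^ r * (complex_of_real (?a ^ r - ?b ^ r) * ?Ev + complex_of_real (?b ^ r) * (?Ev - ?Eu))" .
  have d: "norm (?Ev - ?Eu) \<le> norm (v - u) * norm \<xi>"
  proof -
    have "?Ev - ?Eu = ?Eu * (exp (\<i> * complex_of_real ((v - u) \<bullet> \<xi>)) - 1)"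
      by (simp add: inner_diff_left algebra_simps exp_diff[symmetric] diff_divide_distrib)
         (simp add: exp_add[symmetric] algebra_simps)
    then have "norm (?Ev - ?Eu) = norm (exp (\<i> * complex_of_real ((v - u) \<bullet> \<xi>)) - 1)"
      by (simp add: norm_mult)
    also have "\<dots> \<le> \<bar>(v - u) \<bullet> \<xi>\<bar>" by (rule exp_i_minus_1)
    also have "\<dots> \<le> norm (v - u) * norm \<xi>" by (rule Cauchy_Schwarz_ineq2)
    finally show ?thesis .
  qed
  have "norm (Dk e r (\<lambda>\<xi>. exp (\<i> * complex_of_real (v \<bullet> \<xi>)) - exp (\<i> * complex_of_real (u \<bullet> \<xi>))) \<xi>)
      \<le> \<bar>?a ^ r - ?b ^ r\<bar> * 1 + \<bar>?b\<bar> ^ r * norm (?Ev - ?Eu)"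
  proof -
    have "norm (Dk e r (\<lambda>\<xi>. exp (\<i> * complex_of_real (v \<bullet> \<xi>)) - exp (\<i> * complex_of_real (u \<bullet> \<xi>))) \<xi>)
        = norm (complex_of_real (?a ^ r - ?b ^ r) * ?Ev + complex_of_real (?b ^ r) * (?Ev - ?Eu))"
      unfolding eq by (simp add: norm_mult norm_power)
    also have "\<dots> \<le> norm (complex_of_real (?a ^ r - ?b ^ r) * ?Ev) + norm (complex_of_real (?b ^ r) * (?Ev - ?Eu))"
      by (rule norm_triangle_ineq)
    also have "\<dots> = \<bar>?a ^ r - ?b ^ r\<bar> * 1 + \<bar>?b\<bar> ^ r * norm (?Ev - ?Eu)"
      by (simp only: norm_mult norm_of_real norm_exp_i_times power_abs)
    finally show ?thesis .
  qed
  also have "\<dots> \<le> real r * \<bar>?a - ?b\<bar> + 1 * (norm (v - u) * norm \<xi>)"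
  proof -
    have "\<bar>?b\<bar> ^ r * norm (?Ev - ?Eu) \<le> 1 * (norm (v - u) * norm \<xi>)"
      using assms d by (intro mult_mono power_le_one) auto
    then show ?thesis using pow_diff_le[OF assms(2,1), of r] by (intro add_mono) simp_all
  qed
  finally show "norm (Dk e r (\<lambda>\<xi>. exp (\<i> * complex_of_real (v \<bullet> \<xi>)) - exp (\<i> * complex_of_real (u \<bullet> \<xi>))) \<xi>)
       \<le> real r * \<bar>v \<bullet> e - u \<bullet> e\<bar> + norm (v - u) * norm \<xi>" by simp
qed


lemma measure_cball_le:
  assumes "0 \<le> r"
  shows "measure lborel (cball (0::'a::euclidean_space) r) \<le> (2 * r) ^ DIM('a)"
proof (cases "r = 0")
  case True
  then show ?thesis by simp
next
  case False
  then have r: "0 < r" using assms by simp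
  have sub: "cball (0::'a) r \<subseteq> cube 0 (2 * r)"
    unfolding cube_def by (auto intro: order_trans[OF Basis_le_norm])
  have "measure lborel (cball (0::'a) r) \<le> measure lborel (cube (0::'a) (2 * r))"
    by (rule measure_mono_fmeasurable[OF sub]) (auto simp: cube_cbox)
  also have "\<dots> = (2 * r) ^ DIM('a)" using r by (simp add: measure_cube)
  finally show ?thesis .
qed

lemma big_coord:
  fixes w :: "'a::euclidean_space"
  shows "\<exists>e\<in>Basis. norm w \<le> real DIM('a) * \<bar>w \<bullet> e\<bar>"
proof -
  obtain e where e: "e \<in> Basis" "\<And>b. b \<in> Basis \<Longrightarrow> \<bar>w \<bullet> b\<bar> \<le> \<bar>w \<bullet> e\<bar>"
  proof -
    let ?m = "Max ((\<lambda>b. \<bar>w \<bullet> b\<bar>) ` Basis)"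
    have "?m \<in> (\<lambda>b. \<bar>w \<bullet> b\<bar>) ` Basis" by (rule Max_in) auto
    then obtain e where "e \<in> Basis" "\<bar>w \<bullet> e\<bar> = ?m" by (auto simp del: Max_in)
    moreover have "\<bar>w \<bullet> b\<bar> \<le> ?m" if "b \<in> Basis" for b by (rule Max_ge) (use that in auto)
    ultimately show ?thesis using that by auto
  qed
  have "norm w \<le> (\<Sum>b\<in>Basis. \<bar>w \<bullet> b\<bar>)" by (rule norm_le_l1)
  also have "\<dots> \<le> (\<Sum>b\<in>(Basis::'a set). \<bar>w \<bullet> e\<bar>)" by (intro sum_mono e(2))
  also have "\<dots> = real DIM('a) * \<bar>w \<bullet> e\<bar>" by simp
  finally show ?thesis using e(1) by blast
qed


definition KF :: "real \<Rightarrow> nat \<Rightarrow> real" where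
  "KF C0 n = (4 * C0) ^ n + (real n * pi) ^ (n + 1) * (4 * C0 + 2 * real (n + 1) * real n * pi) ^ n"

lemma FIN:
  fixes c :: "'a::euclidean_space \<Rightarrow> complex"
  assumes C0: "1 \<le> C0" and cs: "CS c (2 * C0 * 2 ^ j)" and sd: "\<forall>e\<in>Basis. sdir e c"
    and B0: "\<And>\<xi>. norm (c \<xi>) \<le> K * 2 ^ j * l / 2 ^ (j * DIM('a))"
    and Bm: "\<And>e \<xi>. e \<in> Basis \<Longrightarrow> norm (Dk e (DIM('a) + 1) c \<xi>) \<le> K * 2 ^ j * l / 2 ^ (j * DIM('a))"
    and K0: "0 \<le> K" and l0: "0 \<le> l"
  shows "norm (\<integral>\<xi>. exp (\<i> * complex_of_real (w \<bullet> \<xi>)) * c \<xi> \<partial>lborel)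
     \<le> K * KF C0 DIM('a) * 2 ^ j * l / (max 1 (norm w)) ^ (DIM('a) + 1)"
proof -
  define n where "n = DIM('a)"
  define M where "M = n + 1"
  define B where "B = K * 2 ^ j * l / 2 ^ (j * n)"
  define R where "R = 2 * C0 * 2 ^ j"
  define P where "P = (2::real) ^ j"
  have P1: "1 \<le> P" by (simp add: P_def)
  have B0': "0 \<le> B" unfolding B_def using K0 l0 by simp
  have BP: "B * P ^ n = K * P * l" unfolding B_def P_def by (simp add: power_mult)
  have R0: "0 \<le> R" unfolding R_def using C0 by simp
  define I where "I = (\<integral>\<xi>. exp (\<i> * complex_of_real (w \<bullet> \<xi>)) * c \<xi> \<partial>lborel)"
  have KFa: "(4 * C0) ^ n \<le> KF C0 n" and KFb: "(real n * pi) ^ M * (4 * C0 + 2 * real M * real n * pi) ^ n \<le> KF C0 n"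
    unfolding KF_def M_def using C0 by auto
  show ?thesis
  proof (cases "norm w \<le> 1")
    case True
    have "norm I \<le> B * measure lborel (cball (0::'a) R)"
      unfolding I_def by (rule L0[OF cs[folded R_def]]) (use B0 in \<open>simp add: B_def n_def\<close>)
    also have "\<dots> \<le> B * (2 * R) ^ n"
      using measure_cball_le[OF R0] B0' unfolding n_def by (intro mult_left_mono) auto
    also have "(2 * R) ^ n = (4 * C0) ^ n * P ^ n" unfolding R_def P_def by (simp add: power_mult_distrib)
    also have "B * ((4 * C0) ^ n * P ^ n) = K * P * l * (4 * C0) ^ n" using BP by (simp add: algebra_simps)
    also have "\<dots> \<le> K * P * l * KF C0 n"
      using KFa K0 l0 P1 by (intro mult_left_mono) auto
    finally show ?thesis using True unfolding I_def n_def P_def by (simp add: algebra_simps)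
  next
    case False
    then have w1: "1 < norm w" by simp
    obtain e where e: "e \<in> Basis" "norm w \<le> real n * \<bar>w \<bullet> e\<bar>" using big_coord[of w] unfolding n_def by blast
    have n1: "1 \<le> real n" unfolding n_def by (simp add: DIM_positive Suc_leI)
    have we: "0 < \<bar>w \<bullet> e\<bar>" using e(2) w1 by (cases "w \<bullet> e = 0") auto
    define q where "q = pi / \<bar>w \<bullet> e\<bar>"
    have q0: "0 \<le> q" unfolding q_def by simp
    have qa: "q \<le> real n * pi / norm w"
    proof -
      have h: "norm w / real n \<le> \<bar>w \<bullet> e\<bar>" using e(2) n1 by (simp add: divide_le_eq mult.commute)
      have "pi / \<bar>w \<bullet> e\<bar> \<le> pi / (norm w / real n)"
        by (rule divide_left_mono[OF h]) (use w1 n1 we in \<open>auto intro!: divide_pos_pos mult_pos_pos\<close>)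
      then show ?thesis unfolding q_def by (simp add: mult.commute)
    qed
    have qb: "q \<le> real n * pi"
    proof -
      have "real n * pi / norm w \<le> real n * pi / 1"
        by (rule divide_left_mono) (use w1 n1 in auto)
      with qa show ?thesis by simp
    qed
    have "norm I \<le> q ^ M * B * measure lborel (cball (0::'a) (R + real M * q))"
      unfolding I_def q_def M_def n_def
      by (rule FD[OF cs[folded R_def] bspec[OF sd e(1)]]) (use e we Bm in \<open>auto simp: B_def n_def norm_Basis\<close>)
    also have "\<dots> \<le> q ^ M * B * (2 * (R + real M * q)) ^ n"
      using measure_cball_le[of "R + real M * q"] R0 q0 B0' unfolding n_def
      by (intro mult_left_mono) (auto intro: mult_nonneg_nonneg)
    also have "\<dots> \<le> (real n * pi / norm w) ^ M * B * ((4 * C0 + 2 * real M * real n * pi) * P) ^ n"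
    proof -
      have x: "2 * (R + real M * q) \<le> (4 * C0 + 2 * real M * real n * pi) * P"
      proof -
        have "real M * q \<le> real M * (real n * pi)" using qb by (intro mult_left_mono) auto
        also have "\<dots> \<le> real M * (real n * pi) * P" using mult_left_mono[OF P1, of "real M * (real n * pi)"] by simp
        finally show ?thesis unfolding R_def P_def by (simp add: algebra_simps)
      qed
      have y: "(2 * (R + real M * q)) ^ n \<le> ((4 * C0 + 2 * real M * real n * pi) * P) ^ n"
        by (rule power_mono[OF x]) (use R0 q0 in auto)
      have z: "q ^ M \<le> (real n * pi / norm w) ^ M"
        by (rule power_mono[OF qa q0])
      have "q ^ M * B \<le> (real n * pi / norm w) ^ M * B"
        by (rule mult_right_mono[OF z B0'])
      then show ?thesis
        by (rule mult_mono[OF _ y]) (use B0' R0 q0 in auto)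
    qed
    also have "\<dots> = (real n * pi) ^ M * (4 * C0 + 2 * real M * real n * pi) ^ n * (B * P ^ n) / norm w ^ M"
      by (simp add: power_divide power_mult_distrib)
    also have "\<dots> = (real n * pi) ^ M * (4 * C0 + 2 * real M * real n * pi) ^ n * (K * P * l) / norm w ^ M"
      by (simp only: BP)
    also have "\<dots> \<le> KF C0 n * (K * P * l) / norm w ^ M"
      using KFb K0 l0 P1 w1 by (intro divide_right_mono mult_right_mono) auto
    finally show ?thesis using w1 unfolding I_def n_def M_def P_def by (simp add: algebra_simps)
  qed
qed


lemma SL1:
  fixes F :: "'a::euclidean_space \<times> 'b::euclidean_space \<Rightarrow> 'c::real_normed_vector"
  shows "dpds (map (\<lambda>b. (0, b)) as) F = (\<lambda>(x, \<xi>). dpds as (\<lambda>\<eta>. F (x, \<eta>)) \<xi>)"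
proof (induction as)
  case Nil then show ?case by auto
next
  case (Cons b as)
  have "dpd (0, b) (\<lambda>(x, \<xi>). dpds as (\<lambda>\<eta>. F (x, \<eta>)) \<xi>) (x, \<xi>) = dpd b (dpds as (\<lambda>\<eta>. F (x, \<eta>))) \<xi>" for x \<xi>
    unfolding dpd_def by simp
  then show ?case by (simp only: list.map dpds.simps Cons.IH) (auto simp: fun_eq_iff)
qed

lemma SL2:
  fixes G :: "'a::euclidean_space \<times> 'b::euclidean_space \<Rightarrow> 'c::real_normed_vector"
  shows "dpd (b, 0) G (x, \<xi>) = dpd b (\<lambda>x'. G (x', \<xi>)) x"
  unfolding dpd_def by simp

lemma jbr_ge_norm: "norm \<xi> \<le> jbr \<xi>"
  unfolding jbr_def by (rule real_le_rsqrt) simp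

lemma jbr_ge1: "1 \<le> jbr \<xi>"
  unfolding jbr_def by simp

lemma jbr_le: "jbr \<xi> \<le> 1 + norm \<xi>"
proof -
  have "jbr \<xi> \<le> sqrt ((1 + norm \<xi>)\<^sup>2)"
    unfolding jbr_def by (rule real_sqrt_le_mono) (simp add: power2_eq_square algebra_simps)
  then show ?thesis by simp
qed

lemma jbr_Ann1:
  assumes "\<xi> \<in> Ann C0 j" "0 < C0"
  shows "jbr \<xi> powr (- real n) \<le> C0 ^ n / 2 ^ (j * n)"
proof -
  have p: "0 < 2 ^ j / C0" using assms by simp
  have "2 ^ j / C0 \<le> jbr \<xi>" using assms(1) jbr_ge_norm[of \<xi>] unfolding Ann_def by auto
  then have "jbr \<xi> powr (- real n) \<le> (2 ^ j / C0) powr (- real n)"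
    using powr_mono2'[of "- real n" "2 ^ j / C0" "jbr \<xi>"] p by simp
  also have "\<dots> = C0 ^ n / 2 ^ (j * n)"
    using p assms(2) by (simp add: powr_minus powr_realpow power_divide power_mult)
  finally show ?thesis .
qed

lemma jbr_Ann2:
  assumes "\<xi> \<in> Ann C0 j" "1 \<le> C0" "0 \<le> \<delta>" "\<delta> \<le> 1"
  shows "jbr \<xi> powr (\<delta> - real n) \<le> (1 + 2 * C0) * 2 ^ j * (C0 ^ n / 2 ^ (j * n))"
proof -
  have j1: "1 \<le> jbr \<xi>" by (rule jbr_ge1)
  have "jbr \<xi> powr \<delta> \<le> jbr \<xi> powr 1" by (rule powr_mono[OF assms(4) j1])
  also have "\<dots> \<le> 1 + norm \<xi>" using j1 jbr_le[of \<xi>] by simp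
  also have "\<dots> \<le> 1 + 2 * C0 * 2 ^ j" using assms(1) unfolding Ann_def by simp
  also have "\<dots> \<le> (1 + 2 * C0) * 2 ^ j"
  proof -
    have "(1::real) \<le> 2 ^ j" by simp
    then show ?thesis by (simp add: algebra_simps)
  qed
  finally have a: "jbr \<xi> powr \<delta> \<le> (1 + 2 * C0) * 2 ^ j" .
  have "jbr \<xi> powr (\<delta> - real n) = jbr \<xi> powr \<delta> * jbr \<xi> powr (- real n)"
    using j1 by (simp add: powr_add[symmetric])
  also have "\<dots> \<le> (1 + 2 * C0) * 2 ^ j * (C0 ^ n / 2 ^ (j * n))"
    by (rule mult_mono[OF a jbr_Ann1[OF assms(1)]]) (use assms in auto)
  finally show ?thesis .
qed

lemma AX:
  fixes G :: "'a::euclidean_space \<Rightarrow> complex"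
  assumes "\<And>b. b \<in> Basis \<Longrightarrow> dd b G" "\<And>b p. b \<in> Basis \<Longrightarrow> norm (dpd b G p) \<le> L"
  shows "norm (G x - G z) \<le> L * (\<Sum>b\<in>Basis. \<bar>(x - z) \<bullet> b\<bar>)"
proof -
  have main: "S \<subseteq> Basis \<Longrightarrow> norm (G p - G (p + (\<Sum>b\<in>S. (d \<bullet> b) *\<^sub>R b))) \<le> L * (\<Sum>b\<in>S. \<bar>d \<bullet> b\<bar>)" for S p d
  proof (induction S rule: infinite_finite_induct)
    case (infinite S)
    then show ?case using finite_subset[OF _ finite_Basis] by blast
  next
    case empty then show ?case by simp
  next
    case (insert b S)
    have b: "b \<in> Basis" using insert by auto
    let ?q = "p + (\<Sum>b\<in>S. (d \<bullet> b) *\<^sub>R b)"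
    have "norm (G p - G (p + (\<Sum>b\<in>insert b S. (d \<bullet> b) *\<^sub>R b)))
        \<le> norm (G p - G ?q) + norm (G ?q - G (?q + (d \<bullet> b) *\<^sub>R b))"
      using insert by (simp add: algebra_simps norm_triangle_ineq4 order_trans[OF _ norm_triangle_ineq])
    also have "\<dots> \<le> L * (\<Sum>b\<in>S. \<bar>d \<bullet> b\<bar>) + L * \<bar>d \<bullet> b\<bar>"
      using insert.IH[of] insert(4) mvt_dir[OF assms(1)[OF b] norm_Basis[OF b] assms(2)[OF b], of ?q "d \<bullet> b"]
      by (intro add_mono) auto
    finally show ?case using insert by (simp add: algebra_simps)
  qed
  have "norm (G x - G (x + (\<Sum>b\<in>Basis. ((z - x) \<bullet> b) *\<^sub>R b))) \<le> L * (\<Sum>b\<in>Basis. \<bar>(z - x) \<bullet> b\<bar>)"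
    by (rule main) simp
  moreover have "(\<Sum>b\<in>Basis. \<bar>(z - x) \<bullet> b\<bar>) = (\<Sum>b\<in>Basis. \<bar>(x - z) \<bullet> b\<bar>)"
    by (intro sum.cong) (auto simp: inner_diff_left)
  ultimately show ?thesis by (simp add: euclidean_representation)
qed


lemma choose_sum2: "(\<Sum>r = 0..i. real (i choose r) * X * Y) = 2 ^ i * (X * Y)"
proof -
  have "(\<Sum>r = 0..i. real (i choose r) * X * Y) = (\<Sum>r = 0..i. real (i choose r)) * (X * Y)"
    by (simp add: sum_distrib_right mult.assoc)
  also have "(\<Sum>r = 0..i. real (i choose r)) = 2 ^ i"
    using choose_row_sum[of i] by (simp add: atMost_atLeast0 flip: of_nat_sum)
  finally show ?thesis .
qed

lemma FB:
  fixes A1 A2 :: "'a::euclidean_space \<Rightarrow> complex" and v u \<xi> :: 'a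
  assumes sA1: "sdir e A1" and sA2: "sdir e A2" and ve: "\<bar>v \<bullet> e\<bar> \<le> 1" and ue: "\<bar>u \<bullet> e\<bar> \<le> 1"
    and SA: "\<And>r. r \<le> i \<Longrightarrow> norm (Dk e r A1 \<xi>) \<le> SA"
    and SD: "\<And>r. r \<le> i \<Longrightarrow> norm (Dk e r (\<lambda>\<xi>. A1 \<xi> - A2 \<xi>) \<xi>) \<le> SD"
  shows "norm (Dk e i (\<lambda>\<xi>. exp (\<i> * complex_of_real (v \<bullet> \<xi>)) * A1 \<xi> - exp (\<i> * complex_of_real (u \<bullet> \<xi>)) * A2 \<xi>) \<xi>)
      \<le> 2 ^ i * ((real i * \<bar>v \<bullet> e - u \<bullet> e\<bar> + norm (v - u) * norm \<xi>) * SA) + 2 ^ i * (1 * SD)"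
proof -
  let ?Ev = "\<lambda>\<xi>. exp (\<i> * complex_of_real (v \<bullet> \<xi>))" and ?Eu = "\<lambda>\<xi>. exp (\<i> * complex_of_real (u \<bullet> \<xi>))"
  have eq: "(\<lambda>\<xi>. ?Ev \<xi> * A1 \<xi> - ?Eu \<xi> * A2 \<xi>) = (\<lambda>\<xi>. (\<lambda>\<xi>. (?Ev \<xi> - ?Eu \<xi>) * A1 \<xi>) \<xi> + (\<lambda>\<xi>. ?Eu \<xi> * (A1 \<xi> - A2 \<xi>)) \<xi>)"
    by (simp add: fun_eq_iff algebra_simps)
  have sE: "sdir e (\<lambda>\<xi>. ?Ev \<xi> - ?Eu \<xi>)" by (intro sdir_diff sdir_exp)
  have sD: "sdir e (\<lambda>\<xi>. A1 \<xi> - A2 \<xi>)" by (intro sdir_diff sA1 sA2)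
  have s1: "sdir e (\<lambda>\<xi>. (?Ev \<xi> - ?Eu \<xi>) * A1 \<xi>)" by (intro sdir_mult sE sA1)
  have s2: "sdir e (\<lambda>\<xi>. ?Eu \<xi> * (A1 \<xi> - A2 \<xi>))" by (intro sdir_mult sdir_exp sD)
  have b1: "norm (Dk e i (\<lambda>\<xi>. (?Ev \<xi> - ?Eu \<xi>) * A1 \<xi>) \<xi>)
      \<le> (\<Sum>r = 0..i. real (i choose r) * (real i * \<bar>v \<bullet> e - u \<bullet> e\<bar> + norm (v - u) * norm \<xi>) * SA)"
  proof (rule leib_bound[OF sE sA1])
    fix r assume r: "r \<le> i"
    have "norm (Dk e r (\<lambda>\<xi>. ?Ev \<xi> - ?Eu \<xi>) \<xi>) \<le> real r * \<bar>v \<bullet> e - u \<bullet> e\<bar> + norm (v - u) * norm \<xi>"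
      by (rule E_bounds(2)[OF ue ve])
    also have "\<dots> \<le> real i * \<bar>v \<bullet> e - u \<bullet> e\<bar> + norm (v - u) * norm \<xi>"
      using r by (intro add_right_mono mult_right_mono) auto
    finally show "norm (Dk e r (\<lambda>\<xi>. ?Ev \<xi> - ?Eu \<xi>) \<xi>) \<le> real i * \<bar>v \<bullet> e - u \<bullet> e\<bar> + norm (v - u) * norm \<xi>" .
  next
    fix r assume "r \<le> i" then show "norm (Dk e r A1 \<xi>) \<le> SA" using SA by simp
  qed
  have b2: "norm (Dk e i (\<lambda>\<xi>. ?Eu \<xi> * (A1 \<xi> - A2 \<xi>)) \<xi>) \<le> (\<Sum>r = 0..i. real (i choose r) * 1 * SD)"
  proof (rule leib_bound[OF sdir_exp sD])
    fix r show "norm (Dk e r ?Eu \<xi>) \<le> 1" by (rule E_bounds(1)[OF ue ve])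
  next
    fix r assume "r \<le> i" then show "norm (Dk e r (\<lambda>\<xi>. A1 \<xi> - A2 \<xi>) \<xi>) \<le> SD" using SD by simp
  qed
  have "norm (Dk e i (\<lambda>\<xi>. ?Ev \<xi> * A1 \<xi> - ?Eu \<xi> * A2 \<xi>) \<xi>)
      \<le> norm (Dk e i (\<lambda>\<xi>. (?Ev \<xi> - ?Eu \<xi>) * A1 \<xi>) \<xi>) + norm (Dk e i (\<lambda>\<xi>. ?Eu \<xi> * (A1 \<xi> - A2 \<xi>)) \<xi>)"
    unfolding eq Dk_add[OF s1 s2] by (rule norm_triangle_ineq)
  also have "\<dots> \<le> 2 ^ i * ((real i * \<bar>v \<bullet> e - u \<bullet> e\<bar> + norm (v - u) * norm \<xi>) * SA) + 2 ^ i * (1 * SD)"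
    using b1 b2 unfolding choose_sum2 by (rule add_mono)
  finally show ?thesis .
qed

lemma CS_Ps:
  fixes psi psim1 :: "'a::euclidean_space \<Rightarrow> real" and g :: "'a \<Rightarrow> complex"
  assumes LP: "LP_data C0 psim1 psi" and g: "continuous_on UNIV g"
  shows "CS (\<lambda>\<xi>. g \<xi> * Ps psi j \<xi>) (2 * C0 * 2 ^ j)"
  unfolding CS_def
proof safe
  show "continuous_on UNIV (\<lambda>\<xi>. g \<xi> * Ps psi j \<xi>)"
    by (rule continuous_on_mult[OF g psi_facts(4)[OF LP]])
next
  fix \<xi> :: 'a assume "2 * C0 * 2 ^ j < norm \<xi>"
  then have "\<xi> \<notin> Ann C0 j" unfolding Ann_def by auto
  then have "Dk e 0 (Ps psi j) \<xi> = 0" using psi_facts(3)[OF LP, of e 0 j \<xi>] by blast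
  then show "g \<xi> * Ps psi j \<xi> = 0" by simp
qed

lemma KR:
  fixes A1 A2 :: "'a::euclidean_space \<Rightarrow> complex" and P :: "'a \<Rightarrow> complex"
  assumes c1: "CS (\<lambda>\<xi>. A1 \<xi> * P \<xi>) R" and c2: "CS (\<lambda>\<xi>. A2 \<xi> * P \<xi>) R"
  shows "(\<integral>\<xi>. exp (\<i> * complex_of_real ((x - y) \<bullet> \<xi>)) * (A1 \<xi> * P \<xi>) \<partial>lborel)
       - (\<integral>\<xi>. exp (\<i> * complex_of_real ((z - y) \<bullet> \<xi>)) * (A2 \<xi> * P \<xi>) \<partial>lborel)
     = (\<integral>\<xi>. exp (\<i> * complex_of_real ((x0 - y) \<bullet> \<xi>)) *
           ((exp (\<i> * complex_of_real ((x - x0) \<bullet> \<xi>)) * A1 \<xi> - exp (\<i> * complex_of_real ((z - x0) \<bullet> \<xi>)) * A2 \<xi>) * P \<xi>) \<partial>lborel)"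
proof -
  have sp: "exp (\<i> * complex_of_real ((p - y) \<bullet> \<xi>)) = exp (\<i> * complex_of_real ((x0 - y) \<bullet> \<xi>)) * exp (\<i> * complex_of_real ((p - x0) \<bullet> \<xi>))" for p \<xi>
  proof -
    have "(p - y) \<bullet> \<xi> = (x0 - y) \<bullet> \<xi> + (p - x0) \<bullet> \<xi>" by (simp add: inner_diff_left)
    then show ?thesis by (simp add: distrib_left exp_add)
  qed
  have i1: "integrable lborel (\<lambda>\<xi>. exp (\<i> * complex_of_real ((x - y) \<bullet> \<xi>)) * (A1 \<xi> * P \<xi>))"
    by (rule CS_integrable[OF CS_exp[OF c1]])
  have i2: "integrable lborel (\<lambda>\<xi>. exp (\<i> * complex_of_real ((z - y) \<bullet> \<xi>)) * (A2 \<xi> * P \<xi>))"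
    by (rule CS_integrable[OF CS_exp[OF c2]])
  have "(\<integral>\<xi>. exp (\<i> * complex_of_real ((x - y) \<bullet> \<xi>)) * (A1 \<xi> * P \<xi>) \<partial>lborel)
       - (\<integral>\<xi>. exp (\<i> * complex_of_real ((z - y) \<bullet> \<xi>)) * (A2 \<xi> * P \<xi>) \<partial>lborel)
      = (\<integral>\<xi>. exp (\<i> * complex_of_real ((x - y) \<bullet> \<xi>)) * (A1 \<xi> * P \<xi>) - exp (\<i> * complex_of_real ((z - y) \<bullet> \<xi>)) * (A2 \<xi> * P \<xi>) \<partial>lborel)"
    by (rule Bochner_Integration.integral_diff[OF i1 i2, symmetric])
  also have "\<dots> = (\<integral>\<xi>. exp (\<i> * complex_of_real ((x0 - y) \<bullet> \<xi>)) *
           ((exp (\<i> * complex_of_real ((x - x0) \<bullet> \<xi>)) * A1 \<xi> - exp (\<i> * complex_of_real ((z - x0) \<bullet> \<xi>)) * A2 \<xi>) * P \<xi>) \<partial>lborel)"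
  proof (rule Bochner_Integration.integral_cong)
    fix \<xi> :: 'a
    let ?E0 = "exp (\<i> * complex_of_real ((x0 - y) \<bullet> \<xi>))"
    let ?Ex = "exp (\<i> * complex_of_real ((x - x0) \<bullet> \<xi>))"
    let ?Ez = "exp (\<i> * complex_of_real ((z - x0) \<bullet> \<xi>))"
    have r: "?E0 * ?Ex * (A1 \<xi> * P \<xi>) - ?E0 * ?Ez * (A2 \<xi> * P \<xi>) = ?E0 * ((?Ex * A1 \<xi> - ?Ez * A2 \<xi>) * P \<xi>)"
      by (simp only: right_diff_distrib left_diff_distrib mult.assoc mult.left_commute)
    show "exp (\<i> * complex_of_real ((x - y) \<bullet> \<xi>)) * (A1 \<xi> * P \<xi>) - exp (\<i> * complex_of_real ((z - y) \<bullet> \<xi>)) * (A2 \<xi> * P \<xi>)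
       = ?E0 * ((?Ex * A1 \<xi> - ?Ez * A2 \<xi>) * P \<xi>)"
      unfolding sp[of x \<xi>] sp[of z \<xi>] by (rule r)
  qed simp
  finally show ?thesis .
qed


definition Kcore :: "real \<Rightarrow> nat \<Rightarrow> real \<Rightarrow> real \<Rightarrow> real \<Rightarrow> real" where
  "Kcore C0 n Ca Db Mp = (2 ^ (n+1) * ((real (n+1) + 2 * real n * C0) * Ca * C0 ^ n + Db * C0 ^ n)) * 2 ^ (n+1) * Mp * KF C0 n"

lemma core:
  fixes psi psim1 :: "'a::euclidean_space \<Rightarrow> real" and A1 A2 :: "'a \<Rightarrow> complex"
  assumes LP: "LP_data C0 psim1 psi"
    and Mp: "\<forall>i\<in>{..DIM('a)+1}. \<forall>e\<in>Basis. \<forall>\<xi> j. norm (Dk e i (Ps psi j) \<xi>) \<le> Mp" and Mp0: "0 \<le> Mp"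
    and l0: "0 < l" and l1: "l < 1" and xc: "x \<in> cube x0 l" and zc: "z \<in> cube x0 l"
    and c1: "continuous_on UNIV A1" and c2: "continuous_on UNIV A2"
    and s1: "\<And>e. e \<in> Basis \<Longrightarrow> sdir e A1" and s2: "\<And>e. e \<in> Basis \<Longrightarrow> sdir e A2"
    and Ca0: "0 \<le> Ca" and Db0: "0 \<le> Db"
    and bA: "\<And>e i \<xi>. e \<in> Basis \<Longrightarrow> i \<le> DIM('a)+1 \<Longrightarrow> \<xi> \<in> Ann C0 j \<Longrightarrow>
               norm (Dk e i A1 \<xi>) \<le> Ca * (C0 ^ DIM('a) / 2 ^ (j * DIM('a)))"
    and bD: "\<And>e i \<xi>. e \<in> Basis \<Longrightarrow> i \<le> DIM('a)+1 \<Longrightarrow> \<xi> \<in> Ann C0 j \<Longrightarrow>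
               norm (Dk e i (\<lambda>\<xi>. A1 \<xi> - A2 \<xi>) \<xi>) \<le> Db * (2 ^ j * l) * (C0 ^ DIM('a) / 2 ^ (j * DIM('a)))"
  shows "norm ((\<integral>\<xi>. exp (\<i> * complex_of_real ((x - y) \<bullet> \<xi>)) * (A1 \<xi> * Ps psi j \<xi>) \<partial>lborel)
       - (\<integral>\<xi>. exp (\<i> * complex_of_real ((z - y) \<bullet> \<xi>)) * (A2 \<xi> * Ps psi j \<xi>) \<partial>lborel))
     \<le> Kcore C0 DIM('a) Ca Db Mp * 2 ^ j * l * wt x0 (DIM('a) + 1) y"
proof -
  define n where "n = DIM('a)"
  define N where "N = n + 1"
  have C0: "1 \<le> C0" using LP unfolding LP_data_def by simp
  define Q where "Q = 2 ^ j * l / 2 ^ (j * n)"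
  have Q0: "0 \<le> Q" unfolding Q_def using l0 by simp
  define KK where "KK = 2 ^ N * ((real N + 2 * real n * C0) * Ca * C0 ^ n + Db * C0 ^ n)"
  have KK0: "0 \<le> KK" unfolding KK_def using Ca0 Db0 C0 by simp
  define v where "v = x - x0"
  define u where "u = z - x0"
  let ?Ev = "\<lambda>\<xi>. exp (\<i> * complex_of_real (v \<bullet> \<xi>))" and ?Eu = "\<lambda>\<xi>. exp (\<i> * complex_of_real (u \<bullet> \<xi>))"
  define f where "f = (\<lambda>\<xi>. ?Ev \<xi> * A1 \<xi> - ?Eu \<xi> * A2 \<xi>)"
  define c where "c = (\<lambda>\<xi>. f \<xi> * Ps psi j \<xi>)"
  have xb: "\<bar>v \<bullet> b\<bar> \<le> l / 2" if "b \<in> Basis" for b using xc that unfolding cube_def v_def by auto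
  have zb: "\<bar>u \<bullet> b\<bar> \<le> l / 2" if "b \<in> Basis" for b using zc that unfolding cube_def u_def by auto
  have vb1: "\<bar>v \<bullet> b\<bar> \<le> 1" "\<bar>u \<bullet> b\<bar> \<le> 1" if "b \<in> Basis" for b using xb[OF that] zb[OF that] l1 by auto
  have vub: "\<bar>v \<bullet> b - u \<bullet> b\<bar> \<le> l" if "b \<in> Basis" for b using xb[OF that] zb[OF that] by linarith
  have nvu: "norm (v - u) \<le> real n * l"
  proof -
    have "norm (v - u) \<le> (\<Sum>b\<in>Basis. \<bar>(v - u) \<bullet> b\<bar>)" by (rule norm_le_l1)
    also have "\<dots> \<le> (\<Sum>b\<in>(Basis::'a set). l)" by (intro sum_mono) (use vub in \<open>simp add: inner_diff_left\<close>)
    also have "\<dots> = real n * l" by (simp add: n_def)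
    finally show ?thesis .
  qed
  have sf: "sdir e f" if "e \<in> Basis" for e
    unfolding f_def by (intro sdir_diff sdir_mult sdir_exp s1 s2 that)
  have fA: "norm (Dk e i f \<xi>) \<le> KK * Q" if e: "e \<in> Basis" and i: "i \<le> N" and \<xi>: "\<xi> \<in> Ann C0 j" for e i \<xi>
  proof -
    have nx: "norm \<xi> \<le> 2 * C0 * 2 ^ j" using \<xi> unfolding Ann_def by simp
    have fb: "norm (Dk e i f \<xi>) \<le> 2 ^ i * ((real i * \<bar>v \<bullet> e - u \<bullet> e\<bar> + norm (v - u) * norm \<xi>) * (Ca * (C0 ^ n / 2 ^ (j * n))))
        + 2 ^ i * (1 * (Db * (2 ^ j * l) * (C0 ^ n / 2 ^ (j * n))))"
      unfolding f_def
      by (rule FB[OF s1[OF e] s2[OF e] vb1(1)[OF e] vb1(2)[OF e]])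
         (use bA[OF e _ \<xi>] bD[OF e _ \<xi>] i in \<open>auto simp: n_def N_def\<close>)
    have t1: "real i * \<bar>v \<bullet> e - u \<bullet> e\<bar> + norm (v - u) * norm \<xi> \<le> (real N + 2 * real n * C0) * (2 ^ j * l)"
    proof -
      have p1: "(1::real) \<le> 2 ^ j" by simp
      have "real i * \<bar>v \<bullet> e - u \<bullet> e\<bar> \<le> real N * l" using i vub[OF e] l0 by (intro mult_mono) auto
      also have "\<dots> \<le> real N * (2 ^ j * l)" using p1 l0 by (intro mult_left_mono) auto
      finally have a: "real i * \<bar>v \<bullet> e - u \<bullet> e\<bar> \<le> real N * (2 ^ j * l)" .
      have "norm (v - u) * norm \<xi> \<le> (real n * l) * (2 * C0 * 2 ^ j)"
        using nvu nx l0 by (intro mult_mono) auto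
      then have b: "norm (v - u) * norm \<xi> \<le> 2 * real n * C0 * (2 ^ j * l)" by (simp add: algebra_simps)
      show ?thesis using a b by (simp add: algebra_simps)
    qed
    have s0: "0 \<le> Ca * (C0 ^ n / 2 ^ (j * n))" using Ca0 C0 by simp
    have "2 ^ i * ((real i * \<bar>v \<bullet> e - u \<bullet> e\<bar> + norm (v - u) * norm \<xi>) * (Ca * (C0 ^ n / 2 ^ (j * n))))
        \<le> 2 ^ N * (((real N + 2 * real n * C0) * (2 ^ j * l)) * (Ca * (C0 ^ n / 2 ^ (j * n))))"
    proof -
      have a: "(2::real) ^ i \<le> 2 ^ N" using i by (intro power_increasing) auto
      have b: "(real i * \<bar>v \<bullet> e - u \<bullet> e\<bar> + norm (v - u) * norm \<xi>) * (Ca * (C0 ^ n / 2 ^ (j * n)))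
          \<le> ((real N + 2 * real n * C0) * (2 ^ j * l)) * (Ca * (C0 ^ n / 2 ^ (j * n)))"
        by (rule mult_right_mono[OF t1 s0])
      have c: "0 \<le> (real i * \<bar>v \<bullet> e - u \<bullet> e\<bar> + norm (v - u) * norm \<xi>) * (Ca * (C0 ^ n / 2 ^ (j * n)))"
        using s0 by (intro mult_nonneg_nonneg) (use Ca0 C0 in auto)
      show ?thesis by (rule mult_mono[OF a b]) (use c in auto)
    qed
    also have "\<dots> = 2 ^ N * ((real N + 2 * real n * C0) * Ca * C0 ^ n) * Q"
      unfolding Q_def by (simp add: algebra_simps)
    finally have T1: "2 ^ i * ((real i * \<bar>v \<bullet> e - u \<bullet> e\<bar> + norm (v - u) * norm \<xi>) * (Ca * (C0 ^ n / 2 ^ (j * n))))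
        \<le> 2 ^ N * ((real N + 2 * real n * C0) * Ca * C0 ^ n) * Q" .
    have "2 ^ i * (1 * (Db * (2 ^ j * l) * (C0 ^ n / 2 ^ (j * n)))) \<le> 2 ^ N * (1 * (Db * (2 ^ j * l) * (C0 ^ n / 2 ^ (j * n))))"
      using i Db0 l0 C0 by (intro mult_right_mono power_increasing) auto
    also have "\<dots> = 2 ^ N * (Db * C0 ^ n) * Q" unfolding Q_def by (simp add: algebra_simps)
    finally have T2: "2 ^ i * (1 * (Db * (2 ^ j * l) * (C0 ^ n / 2 ^ (j * n)))) \<le> 2 ^ N * (Db * C0 ^ n) * Q" .
    have "norm (Dk e i f \<xi>) \<le> 2 ^ N * ((real N + 2 * real n * C0) * Ca * C0 ^ n) * Q + 2 ^ N * (Db * C0 ^ n) * Q"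
      using fb T1 T2 by linarith
    also have "\<dots> = KK * Q" unfolding KK_def by (simp add: algebra_simps)
    finally show ?thesis .
  qed
  have cm: "norm (Dk e m c \<xi>) \<le> KK * Q * 2 ^ N * Mp" if e: "e \<in> Basis" and m: "m \<le> N" for e m \<xi>
  proof -
    have "norm (Dk e m c \<xi>) \<le> KK * Q * (2 ^ m * Mp)"
      unfolding c_def
      by (rule cut_bound[OF LP e sf[OF e]]) (use Mp m fA[OF e] KK0 Q0 in \<open>auto simp: N_def n_def\<close>)
    also have "\<dots> \<le> KK * Q * (2 ^ N * Mp)"
      using KK0 Q0 Mp0 m by (intro mult_left_mono mult_right_mono power_increasing) auto
    finally show ?thesis by (simp add: algebra_simps)
  qed
  have cf: "continuous_on UNIV f" unfolding f_def by (intro continuous_intros c1 c2)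
  have csc: "CS c (2 * C0 * 2 ^ j)" unfolding c_def by (rule CS_Ps[OF LP cf])
  obtain e0 :: 'a where e0: "e0 \<in> Basis" using nonempty_Basis by blast
  have KQ: "KK * Q * 2 ^ N * Mp = (KK * 2 ^ N * Mp) * 2 ^ j * l / 2 ^ (j * DIM('a))"
    unfolding Q_def n_def by (simp add: algebra_simps)
  have fin: "norm (\<integral>\<xi>. exp (\<i> * complex_of_real ((x0 - y) \<bullet> \<xi>)) * c \<xi> \<partial>lborel)
     \<le> (KK * 2 ^ N * Mp) * KF C0 DIM('a) * 2 ^ j * l / (max 1 (norm (x0 - y))) ^ (DIM('a) + 1)"
  proof (rule FIN[OF C0 csc])
    show "\<forall>e\<in>Basis. sdir e c" unfolding c_def using sf psi_facts(2)[OF LP] by (auto intro: sdir_mult)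
    show "norm (c \<xi>) \<le> KK * 2 ^ N * Mp * 2 ^ j * l / 2 ^ (j * DIM('a))" for \<xi>
      using cm[OF e0, of 0 \<xi>] KQ by (simp add: N_def)
    show "norm (Dk e (DIM('a) + 1) c \<xi>) \<le> KK * 2 ^ N * Mp * 2 ^ j * l / 2 ^ (j * DIM('a))" if "e \<in> Basis" for e \<xi>
      using cm[OF that, of "N" \<xi>] KQ by (simp add: N_def n_def)
  qed (use KK0 Mp0 l0 in auto)
  have eq: "(\<integral>\<xi>. exp (\<i> * complex_of_real ((x - y) \<bullet> \<xi>)) * (A1 \<xi> * Ps psi j \<xi>) \<partial>lborel)
       - (\<integral>\<xi>. exp (\<i> * complex_of_real ((z - y) \<bullet> \<xi>)) * (A2 \<xi> * Ps psi j \<xi>) \<partial>lborel)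
     = (\<integral>\<xi>. exp (\<i> * complex_of_real ((x0 - y) \<bullet> \<xi>)) * c \<xi> \<partial>lborel)"
    unfolding c_def f_def v_def u_def
    by (rule KR[OF CS_Ps[OF LP c1] CS_Ps[OF LP c2]])
  have "Kcore C0 DIM('a) Ca Db Mp = (KK * 2 ^ N * Mp) * KF C0 DIM('a)"
    unfolding Kcore_def KK_def N_def n_def by simp
  then show ?thesis unfolding eq using fin
    by (simp add: wt_def norm_minus_commute divide_simps)
qed


lemma schwartz_meas:
  fixes u :: "'a::euclidean_space \<Rightarrow> complex"
  assumes "schwartz u"
  shows "u \<in> borel_measurable lborel"
proof -
  have "continuous_on UNIV (dpds [] u)"
    using assms[unfolded schwartz_def smooth_fn_def] by (metis empty_set empty_subsetI)
  then show ?thesis by (auto intro: borel_measurable_continuous_onI)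
qed

lemma INTB:
  fixes u :: "'a::euclidean_space \<Rightarrow> complex" and D :: "'a \<Rightarrow> complex"
  assumes um: "u \<in> borel_measurable lborel"
    and bd: "AE y in lborel. norm (D y) \<le> Kc * 2 ^ j * l * wt x0 (DIM('a) + 1) y"
    and Kc0: "0 \<le> Kc" and l0: "0 \<le> l"
  shows "(\<integral>\<^sup>+ y. ennreal (norm (u y) * norm (D y)) \<partial>lborel)
     \<le> ennreal (Kc * 2 ^ (2 * DIM('a) + 2) * 2 ^ j * l) * maximal_fn u x0"
proof -
  define c where "c = Kc * 2 ^ j * l"
  have c0: "0 \<le> c" unfolding c_def using Kc0 l0 by simp
  have m: "(\<lambda>y. ennreal (norm (u y) * wt x0 (DIM('a) + 1) y)) \<in> borel_measurable lborel"
    using um unfolding wt_def by measurable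
  have "(\<integral>\<^sup>+ y. ennreal (norm (u y) * norm (D y)) \<partial>lborel)
      \<le> (\<integral>\<^sup>+ y. ennreal c * ennreal (norm (u y) * wt x0 (DIM('a) + 1) y) \<partial>lborel)"
  proof (rule nn_integral_mono_AE)
    show "AE y in lborel. ennreal (norm (u y) * norm (D y)) \<le> ennreal c * ennreal (norm (u y) * wt x0 (DIM('a) + 1) y)"
      using bd
    proof eventually_elim
      case (elim y)
      have "norm (u y) * norm (D y) \<le> c * (norm (u y) * wt x0 (DIM('a) + 1) y)"
        using mult_left_mono[OF elim, of "norm (u y)"] unfolding c_def by (simp add: algebra_simps)
      then have "ennreal (norm (u y) * norm (D y)) \<le> ennreal (c * (norm (u y) * wt x0 (DIM('a) + 1) y))"
        by (rule ennreal_leI)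
      then show ?case using c0 wt_pos[of x0 "DIM('a) + 1" y] by (simp add: ennreal_mult)
    qed
  qed
  also have "\<dots> = ennreal c * (\<integral>\<^sup>+ y. ennreal (norm (u y) * wt x0 (DIM('a) + 1) y) \<partial>lborel)"
    by (rule nn_integral_cmult[OF m])
  also have "\<dots> \<le> ennreal c * (ennreal (2 ^ (2 * DIM('a) + 2)) * maximal_fn u x0)"
    by (rule mult_left_mono[OF MX[OF um]]) simp
  also have "\<dots> = ennreal (Kc * 2 ^ (2 * DIM('a) + 2) * 2 ^ j * l) * maximal_fn u x0"
  proof -
    have r: "c * 2 ^ (2 * DIM('a) + 2) = Kc * 2 ^ (2 * DIM('a) + 2) * 2 ^ j * l"
      unfolding c_def by (simp only: mult_ac)
    have "ennreal c * ennreal (2 ^ (2 * DIM('a) + 2)) = ennreal (c * 2 ^ (2 * DIM('a) + 2))"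
      using c0 by (rule ennreal_mult[symmetric]) simp
    then show ?thesis unfolding r by (simp only: mult.assoc[symmetric])
  qed
  finally show ?thesis .
qed

lemma slice_Dk:
  fixes a :: "'a::euclidean_space \<Rightarrow> 'a \<Rightarrow> complex"
  shows "Dk e i (a x) \<xi> = dpds (map (\<lambda>b. (0, b)) (replicate i e)) (\<lambda>(x, \<xi>). a x \<xi>) (x, \<xi>)"
  unfolding Dk_def SL1 by simp

lemma slice_sdir:
  fixes a :: "'a::euclidean_space \<Rightarrow> 'a \<Rightarrow> complex"
  assumes sm: "smooth_fn (\<lambda>(x, \<xi>). a x \<xi>)" and e: "e \<in> Basis"
  shows "sdir e (a x)" "continuous_on UNIV (a x)"
proof -
  have eB: "(0, e) \<in> (Basis :: ('a \<times> 'a) set)" using e by (auto simp: Basis_prod_def)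
  show "sdir e (a x)"
    unfolding sdir_def dd_def
  proof (intro allI)
    fix k p
    have sv: "set (map (\<lambda>b. (0::'a, b)) (replicate k e)) \<subseteq> Basis" using e by (auto simp: Basis_prod_def)
    have "(\<lambda>t. dpds (map (\<lambda>b. (0, b)) (replicate k e)) (\<lambda>(x, \<xi>). a x \<xi>) ((x, p) + t *\<^sub>R (0, e))) differentiable (at 0)"
      using sm[unfolded smooth_fn_def, rule_format, OF sv] eB by blast
    then show "(\<lambda>t. Dk e k (a x) (p + t *\<^sub>R e)) differentiable (at 0)"
      by (simp add: slice_Dk)
  qed
  have "continuous_on UNIV (dpds [] (\<lambda>(x, \<xi>). a x \<xi>))"
    using sm[unfolded smooth_fn_def, rule_format, of "[]"] by simp
  then have c: "continuous_on UNIV (\<lambda>(x, \<xi>). a x \<xi>)" by simp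
  have "continuous_on UNIV ((\<lambda>(x, \<xi>). a x \<xi>) \<circ> (\<lambda>\<xi>. (x, \<xi>)))"
    by (rule continuous_on_compose[OF _ continuous_on_subset[OF c]]) (auto intro: continuous_on_Pair continuous_on_const continuous_on_id)
  then show "continuous_on UNIV (a x)" by (simp add: o_def)
qed


lemma Kcore_nonneg: "1 \<le> C0 \<Longrightarrow> 0 \<le> Ca \<Longrightarrow> 0 \<le> Db \<Longrightarrow> 0 \<le> Mp \<Longrightarrow> 0 \<le> Kcore C0 n Ca Db Mp"
  unfolding Kcore_def KF_def by (intro mult_nonneg_nonneg add_nonneg_nonneg) auto

lemma piece_eq: "j \<noteq> 0 \<Longrightarrow> piece psim1 psi a j x = (\<lambda>\<xi>. a x \<xi> * Ps psi j \<xi>)"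
  unfolding piece_def Ps_def by (simp add: fun_eq_iff)

lemma kdiff:
  fixes a :: "'a::euclidean_space \<Rightarrow> 'a \<Rightarrow> complex"
  assumes "j \<noteq> 0"
  shows "kernel_K psim1 psi a j x y - kernel_K psim1 psi a j z y =
    complex_of_real ((2 * pi) powr - real DIM('a)) *
     ((\<integral>\<xi>. exp (\<i> * complex_of_real ((x - y) \<bullet> \<xi>)) * (a x \<xi> * Ps psi j \<xi>) \<partial>lborel)
    - (\<integral>\<xi>. exp (\<i> * complex_of_real ((z - y) \<bullet> \<xi>)) * (a z \<xi> * Ps psi j \<xi>) \<partial>lborel))"
    "kernel_Kstar psim1 psi a j x y - kernel_Kstar psim1 psi a j z y =
    complex_of_real ((2 * pi) powr - real DIM('a)) *
     ((\<integral>\<xi>. exp (\<i> * complex_of_real ((x - y) \<bullet> \<xi>)) * (a y \<xi> * Ps psi j \<xi>) \<partial>lborel)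
    - (\<integral>\<xi>. exp (\<i> * complex_of_real ((z - y) \<bullet> \<xi>)) * (a y \<xi> * Ps psi j \<xi>) \<partial>lborel))"
  unfolding kernel_K_def kernel_Kstar_def piece_eq[OF assms] by (simp_all add: right_diff_distrib)

lemma cube_diff:
  fixes x z x0 :: "'a::euclidean_space"
  assumes "x \<in> cube x0 l" "z \<in> cube x0 l"
  shows "(\<Sum>b\<in>Basis. \<bar>(x - z) \<bullet> b\<bar>) \<le> real DIM('a) * l"
proof -
  have "\<bar>(x - z) \<bullet> b\<bar> \<le> l" if "b \<in> Basis" for b
  proof -
    have "\<bar>(x - x0) \<bullet> b\<bar> \<le> l / 2" "\<bar>(z - x0) \<bullet> b\<bar> \<le> l / 2" using assms that unfolding cube_def by auto
    moreover have "(x - z) \<bullet> b = (x - x0) \<bullet> b - (z - x0) \<bullet> b" by (simp add: inner_diff_left)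
    ultimately show ?thesis by linarith
  qed
  then have "(\<Sum>b\<in>Basis. \<bar>(x - z) \<bullet> b\<bar>) \<le> (\<Sum>b\<in>(Basis::'a set). l)" by (intro sum_mono) auto
  then show ?thesis by simp
qed


lemma part1:
  fixes a :: "'a::euclidean_space \<Rightarrow> 'a \<Rightarrow> complex"
    and psim1 psi :: "'a \<Rightarrow> real" and C0 \<delta> :: real
  assumes LP: "LP_data C0 psim1 psi" and sy: "symbol_S (- real DIM('a)) 0 \<delta> a" and d0: "0 \<le> \<delta>" and d1: "\<delta> < 1"
  shows "\<exists>C. \<forall>u x0 l j x z. schwartz u \<longrightarrow> 0 < l \<longrightarrow> l < 1 \<longrightarrow> 1 \<le> j \<longrightarrow>
               x \<in> cube x0 l \<longrightarrow> z \<in> cube x0 l \<longrightarrow>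
               (\<integral>\<^sup>+ y. ennreal (norm (u y) * norm (kernel_K psim1 psi a j x y - kernel_K psim1 psi a j z y)) \<partial>lborel)
                 \<le> ennreal (C * 2 ^ j * l) * maximal_fn u x0"
proof -
  define n where "n = DIM('a)"
  define N where "N = n + 1"
  define A where "A = (\<lambda>(x, \<xi>). a x \<xi>)"
  have C0: "1 \<le> C0" using LP unfolding LP_data_def by simp
  have sm: "smooth_fn A" using sy unfolding symbol_S_def A_def by simp
  have SB: "\<And>bs as. set bs \<subseteq> Basis \<Longrightarrow> set as \<subseteq> Basis \<Longrightarrow> \<exists>C. \<forall>x \<xi>. norm (dpds (map (\<lambda>b. (b, 0)) bs @ map (\<lambda>b. (0, b)) as) A (x, \<xi>))
               \<le> C * jbr \<xi> powr (- real DIM('a) - 0 * real (length as) + \<delta> * real (length bs))"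
    using sy unfolding symbol_S_def A_def by blast
  have sdA: "sdir e (a x)" "continuous_on UNIV (a x)" if "e \<in> Basis" for e x
    using slice_sdir[OF sm[unfolded A_def] that] by auto
  obtain Ca where Ca0: "0 \<le> Ca" and Ca: "\<forall>p\<in>Basis \<times> {..N}. \<forall>x \<xi>. norm (Dk (fst p) (snd p) (a x) \<xi>) \<le> Ca * jbr \<xi> powr (- real n)"
  proof -
    have "\<exists>M\<ge>0. \<forall>p\<in>Basis \<times> {..N}. \<forall>x \<xi>. norm (Dk (fst p) (snd p) (a x) \<xi>) \<le> M * jbr \<xi> powr (- real n)"
    proof (rule fin_unif)
      show "\<forall>p\<in>Basis \<times> {..N}. \<exists>M. \<forall>x \<xi>. norm (Dk (fst p) (snd p) (a x) \<xi>) \<le> M * jbr \<xi> powr (- real n)"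
      proof
        fix p :: "'a \<times> nat" assume p: "p \<in> Basis \<times> {..N}"
        obtain C where "\<forall>x \<xi>. norm (dpds (map (\<lambda>b. (b, 0)) [] @ map (\<lambda>b. (0, b)) (replicate (snd p) (fst p))) A (x, \<xi>))
               \<le> C * jbr \<xi> powr (- real DIM('a) - 0 * real (length (replicate (snd p) (fst p))) + \<delta> * real (length ([]::'a list)))"
        proof -
          have s: "set (replicate (snd p) (fst p)) \<subseteq> Basis" using p by (cases "snd p = 0") auto
          show ?thesis using SB[of "[]" "replicate (snd p) (fst p)", OF _ s] that by auto
        qed
        then have "\<forall>x \<xi>. norm (Dk (fst p) (snd p) (a x) \<xi>) \<le> C * jbr \<xi> powr (- real n)"
          by (simp add: slice_Dk A_def n_def)
        then show "\<exists>M. \<forall>x \<xi>. norm (Dk (fst p) (snd p) (a x) \<xi>) \<le> M * jbr \<xi> powr (- real n)" by blast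
      qed
    next
      fix p and M M' :: real
      assume a1: "\<forall>x \<xi>. norm (Dk (fst p) (snd p) (a x) \<xi>) \<le> M * jbr \<xi> powr (- real n)" and a2: "M \<le> M'"
      show "\<forall>x \<xi>. norm (Dk (fst p) (snd p) (a x) \<xi>) \<le> M' * jbr \<xi> powr (- real n)"
      proof (intro allI)
        fix x \<xi> :: 'a
        have "M * jbr \<xi> powr (- real n) \<le> M' * jbr \<xi> powr (- real n)" using a2 by (intro mult_right_mono) auto
        then show "norm (Dk (fst p) (snd p) (a x) \<xi>) \<le> M' * jbr \<xi> powr (- real n)" using a1 by (meson order_trans)
      qed
    qed simp
    then show ?thesis using that by blast
  qed
  define vs where "vs e i = map (\<lambda>b. (0::'a, b)) (replicate i e)" for e :: 'a and i :: nat
  obtain Cb where Cb0: "0 \<le> Cb" and Cb: "\<forall>p\<in>Basis \<times> Basis \<times> {..N}. \<forall>x \<xi>.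
      norm (dpds ((fst p, 0) # vs (fst (snd p)) (snd (snd p))) A (x, \<xi>)) \<le> Cb * jbr \<xi> powr (\<delta> - real n)"
  proof -
    have "\<exists>M\<ge>0. \<forall>p\<in>Basis \<times> Basis \<times> {..N}. \<forall>x \<xi>.
      norm (dpds ((fst p, 0) # vs (fst (snd p)) (snd (snd p))) A (x, \<xi>)) \<le> M * jbr \<xi> powr (\<delta> - real n)"
    proof (rule fin_unif)
      show "\<forall>p\<in>Basis \<times> Basis \<times> {..N}. \<exists>M. \<forall>x \<xi>.
          norm (dpds ((fst p, 0) # vs (fst (snd p)) (snd (snd p))) A (x, \<xi>)) \<le> M * jbr \<xi> powr (\<delta> - real n)"
      proof
        fix p :: "'a \<times> 'a \<times> nat" assume p: "p \<in> Basis \<times> Basis \<times> {..N}"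
        obtain C where "\<forall>x \<xi>. norm (dpds (map (\<lambda>b. (b, 0)) [fst p] @ map (\<lambda>b. (0, b)) (replicate (snd (snd p)) (fst (snd p)))) A (x, \<xi>))
               \<le> C * jbr \<xi> powr (- real DIM('a) - 0 * real (length (replicate (snd (snd p)) (fst (snd p)))) + \<delta> * real (length [fst p]))"
        proof -
          have s: "set (replicate (snd (snd p)) (fst (snd p))) \<subseteq> Basis" using p by (cases "snd (snd p) = 0") auto
          have s2: "set [fst p] \<subseteq> Basis" using p by auto
          show ?thesis using SB[of "[fst p]" "replicate (snd (snd p)) (fst (snd p))", OF s2 s] that by blast
        qed
        then have "\<forall>x \<xi>. norm (dpds ((fst p, 0) # vs (fst (snd p)) (snd (snd p))) A (x, \<xi>)) \<le> C * jbr \<xi> powr (\<delta> - real n)"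
          by (simp add: vs_def n_def)
        then show "\<exists>M. \<forall>x \<xi>. norm (dpds ((fst p, 0) # vs (fst (snd p)) (snd (snd p))) A (x, \<xi>)) \<le> M * jbr \<xi> powr (\<delta> - real n)"
          by blast
      qed
    next
      fix p and M M' :: real
      assume a1: "\<forall>x \<xi>. norm (dpds ((fst p, 0) # vs (fst (snd p)) (snd (snd p))) A (x, \<xi>)) \<le> M * jbr \<xi> powr (\<delta> - real n)"
        and a2: "M \<le> M'"
      show "\<forall>x \<xi>. norm (dpds ((fst p, 0) # vs (fst (snd p)) (snd (snd p))) A (x, \<xi>)) \<le> M' * jbr \<xi> powr (\<delta> - real n)"
      proof (intro allI)
        fix x \<xi> :: 'a
        have "M * jbr \<xi> powr (\<delta> - real n) \<le> M' * jbr \<xi> powr (\<delta> - real n)" using a2 by (intro mult_right_mono) auto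
        then show "norm (dpds ((fst p, 0) # vs (fst (snd p)) (snd (snd p))) A (x, \<xi>)) \<le> M' * jbr \<xi> powr (\<delta> - real n)"
          using a1 by (meson order_trans)
      qed
    qed simp
    then show ?thesis using that by blast
  qed
  obtain Mp where Mp0: "0 \<le> Mp" and Mp: "\<forall>i\<in>{..DIM('a)+1}. \<forall>e\<in>Basis. \<forall>\<xi> j. norm (Dk e i (Ps psi j) \<xi>) \<le> Mp"
    using psi_unif[OF LP, of "DIM('a)+1"] by blast
  define Db where "Db = Cb * (1 + 2 * C0) * real n"
  have Db0: "0 \<le> Db" unfolding Db_def using Cb0 C0 by simp
  define k0 where "k0 = (2 * pi) powr - real DIM('a)"
  have k0: "0 < k0" unfolding k0_def by simp
  define Kc where "Kc = k0 * Kcore C0 DIM('a) Ca Db Mp"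
  have Kc0: "0 \<le> Kc" unfolding Kc_def using k0 Kcore_nonneg[OF C0 Ca0 Db0 Mp0] by simp
  have xdiff: "norm (Dk e i (a x) \<xi> - Dk e i (a z) \<xi>) \<le> Cb * jbr \<xi> powr (\<delta> - real n) * (\<Sum>b\<in>Basis. \<bar>(x - z) \<bullet> b\<bar>)"
    if e: "e \<in> Basis" and i: "i \<le> N" for e i x z \<xi>
  proof -
    define G where "G = (\<lambda>x'. dpds (vs e i) A (x', \<xi>))"
    have G: "G x' = Dk e i (a x') \<xi>" for x' unfolding G_def vs_def A_def by (simp add: slice_Dk)
    have sv: "set (vs e i) \<subseteq> Basis" using e by (auto simp: vs_def Basis_prod_def)
    have "norm (G x - G z) \<le> Cb * jbr \<xi> powr (\<delta> - real n) * (\<Sum>b\<in>Basis. \<bar>(x - z) \<bullet> b\<bar>)"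
    proof (rule AX)
      fix b :: 'a assume b: "b \<in> Basis"
      have bB: "(b, 0) \<in> (Basis :: ('a \<times> 'a) set)" using b by (auto simp: Basis_prod_def)
      show "dd b G" unfolding dd_def
      proof
        fix p
        have "(\<lambda>t. dpds (vs e i) A ((p, \<xi>) + t *\<^sub>R (b, 0))) differentiable (at 0)"
          using sm[unfolded smooth_fn_def, rule_format, OF sv] bB by blast
        then show "(\<lambda>t. G (p + t *\<^sub>R b)) differentiable (at 0)" unfolding G_def by simp
      qed
      fix p
      have "dpd b G p = dpds ((b, 0) # vs e i) A (p, \<xi>)" unfolding G_def by (simp add: SL2)
      also have "norm \<dots> \<le> Cb * jbr \<xi> powr (\<delta> - real n)"
        using Cb b e i by fastforce
      finally show "norm (dpd b G p) \<le> Cb * jbr \<xi> powr (\<delta> - real n)" .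
    qed
    then show ?thesis by (simp add: G)
  qed
  show ?thesis
  proof (intro exI allI impI)
    fix u :: "'a \<Rightarrow> complex" and x0 :: 'a and l :: real and j :: nat and x z :: 'a
    assume su: "schwartz u" and l0: "0 < l" and l1: "l < 1" and j1: "1 \<le> j" and xc: "x \<in> cube x0 l" and zc: "z \<in> cube x0 l"
    have cd: "(\<Sum>b\<in>Basis. \<bar>(x - z) \<bullet> b\<bar>) \<le> real n * l" using cube_diff[OF xc zc] by (simp add: n_def)
    have pt: "norm (kernel_K psim1 psi a j x y - kernel_K psim1 psi a j z y) \<le> Kc * 2 ^ j * l * wt x0 (DIM('a) + 1) y" for y
    proof -
      have c: "norm ((\<integral>\<xi>. exp (\<i> * complex_of_real ((x - y) \<bullet> \<xi>)) * (a x \<xi> * Ps psi j \<xi>) \<partial>lborel)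
          - (\<integral>\<xi>. exp (\<i> * complex_of_real ((z - y) \<bullet> \<xi>)) * (a z \<xi> * Ps psi j \<xi>) \<partial>lborel))
         \<le> Kcore C0 DIM('a) Ca Db Mp * 2 ^ j * l * wt x0 (DIM('a) + 1) y"
      proof (rule core[OF LP Mp Mp0 l0 l1 xc zc])
        show "continuous_on UNIV (a x)" "continuous_on UNIV (a z)"
          using sdA nonempty_Basis by blast+
        show "\<And>e. e \<in> Basis \<Longrightarrow> sdir e (a x)" "\<And>e. e \<in> Basis \<Longrightarrow> sdir e (a z)" using sdA by blast+
        show "0 \<le> Ca" "0 \<le> Db" by (fact Ca0 Db0)+
      next
        fix e :: 'a and i and \<xi> :: 'a assume e: "e \<in> Basis" and i: "i \<le> DIM('a) + 1" and \<xi>: "\<xi> \<in> Ann C0 j"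
        have "norm (Dk e i (a x) \<xi>) \<le> Ca * jbr \<xi> powr (- real n)" using Ca e i by (auto simp: N_def n_def)
        also have "\<dots> \<le> Ca * (C0 ^ n / 2 ^ (j * n))"
          using jbr_Ann1[OF \<xi>, of n] C0 Ca0 by (intro mult_left_mono) auto
        finally show "norm (Dk e i (a x) \<xi>) \<le> Ca * (C0 ^ DIM('a) / 2 ^ (j * DIM('a)))" by (simp add: n_def)
        have "norm (Dk e i (\<lambda>\<xi>. a x \<xi> - a z \<xi>) \<xi>) = norm (Dk e i (a x) \<xi> - Dk e i (a z) \<xi>)"
          using Dk_diff[OF sdA(1)[OF e, of x] sdA(1)[OF e, of z], of i] by simp
        also have "\<dots> \<le> Cb * jbr \<xi> powr (\<delta> - real n) * (\<Sum>b\<in>Basis. \<bar>(x - z) \<bullet> b\<bar>)"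
          using xdiff[OF e, of i] i by (simp add: N_def n_def)
        also have "\<dots> \<le> Cb * ((1 + 2 * C0) * 2 ^ j * (C0 ^ n / 2 ^ (j * n))) * (real n * l)"
        proof (intro mult_mono mult_left_mono)
          show "jbr \<xi> powr (\<delta> - real n) \<le> (1 + 2 * C0) * 2 ^ j * (C0 ^ n / 2 ^ (j * n))"
            by (rule jbr_Ann2[OF \<xi> C0 d0]) (use d1 in auto)
        qed (use cd Cb0 C0 in auto)
        also have "\<dots> = Db * (2 ^ j * l) * (C0 ^ DIM('a) / 2 ^ (j * DIM('a)))"
          unfolding Db_def n_def by (simp add: algebra_simps)
        finally show "norm (Dk e i (\<lambda>\<xi>. a x \<xi> - a z \<xi>) \<xi>) \<le> Db * (2 ^ j * l) * (C0 ^ DIM('a) / 2 ^ (j * DIM('a)))" .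
      qed
      have "norm (kernel_K psim1 psi a j x y - kernel_K psim1 psi a j z y) = k0 *
          norm ((\<integral>\<xi>. exp (\<i> * complex_of_real ((x - y) \<bullet> \<xi>)) * (a x \<xi> * Ps psi j \<xi>) \<partial>lborel)
          - (\<integral>\<xi>. exp (\<i> * complex_of_real ((z - y) \<bullet> \<xi>)) * (a z \<xi> * Ps psi j \<xi>) \<partial>lborel))"
      proof -
        have jn: "j \<noteq> 0" using j1 by simp
        show ?thesis using k0 unfolding kdiff(1)[OF jn] k0_def by (simp add: norm_mult)
      qed
      also have "\<dots> \<le> k0 * (Kcore C0 DIM('a) Ca Db Mp * 2 ^ j * l * wt x0 (DIM('a) + 1) y)"
        by (rule mult_left_mono[OF c]) (use k0 in simp)
      finally show ?thesis unfolding Kc_def by (simp add: algebra_simps)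
    qed
    show "(\<integral>\<^sup>+ y. ennreal (norm (u y) * norm (kernel_K psim1 psi a j x y - kernel_K psim1 psi a j z y)) \<partial>lborel)
        \<le> ennreal (Kc * 2 ^ (2 * DIM('a) + 2) * 2 ^ j * l) * maximal_fn u x0"
      by (rule INTB[OF schwartz_meas[OF su]]) (use pt Kc0 l0 in auto)
  qed
qed


lemma jbr_cont: "continuous_on UNIV (\<lambda>\<xi>::'a::real_normed_vector. C * jbr \<xi> powr r)"
proof -
  have c1: "continuous_on UNIV (\<lambda>\<xi>::'a. 1 + (norm \<xi>)\<^sup>2)"
    by (intro continuous_on_add continuous_on_const continuous_on_power continuous_on_norm continuous_on_id)
  have c2: "continuous_on UNIV (\<lambda>\<xi>::'a. jbr \<xi>)"
    unfolding jbr_def by (rule continuous_on_compose2[OF continuous_on_real_sqrt c1]) auto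
  have c3: "continuous_on UNIV (\<lambda>\<xi>::'a. jbr \<xi> powr r)"
  proof (rule continuous_on_powr[OF c2 continuous_on_const], intro ballI)
    fix \<xi> :: 'a
    have "0 < 1 + (norm \<xi>)\<^sup>2" by (intro add_pos_nonneg) auto
    then show "jbr \<xi> \<noteq> 0" unfolding jbr_def by simp
  qed
  show ?thesis by (rule continuous_on_mult[OF continuous_on_const c3])
qed

lemma part2:
  fixes a :: "'a::euclidean_space \<Rightarrow> 'a \<Rightarrow> complex"
    and psim1 psi :: "'a \<Rightarrow> real" and C0 :: real
  assumes LP: "LP_data C0 psim1 psi" and sy: "symbol_LinfS (- real DIM('a)) 0 a"
  shows "\<exists>C. \<forall>u x0 l j x z. schwartz u \<longrightarrow> 0 < l \<longrightarrow> l < 1 \<longrightarrow> 1 \<le> j \<longrightarrow>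
               x \<in> cube x0 l \<longrightarrow> z \<in> cube x0 l \<longrightarrow>
               (\<integral>\<^sup>+ y. ennreal (norm (u y) * norm (kernel_Kstar psim1 psi a j x y - kernel_Kstar psim1 psi a j z y)) \<partial>lborel)
                 \<le> ennreal (C * 2 ^ j * l) * maximal_fn u x0"
proof -
  define n where "n = DIM('a)"
  define N where "N = n + 1"
  define P where "P = (Basis :: 'a set) \<times> {..N}"
  have C0: "1 \<le> C0" using LP unfolding LP_data_def by simp
  have sm: "\<And>x. smooth_fn (a x)" using sy unfolding symbol_LinfS_def by simp
  have LB: "\<And>as. set as \<subseteq> Basis \<Longrightarrow> \<exists>C. \<forall>\<xi>. AE x in lborel. norm (dpds as (a x) \<xi>) \<le> C * jbr \<xi> powr (- real DIM('a) - 0 * real (length as))"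
    using sy unfolding symbol_LinfS_def by blast
  obtain Ca where Ca0: "0 \<le> Ca" and Ca: "\<forall>p\<in>P. \<forall>\<xi>. AE y in lborel. norm (Dk (fst p) (snd p) (a y) \<xi>) \<le> Ca * jbr \<xi> powr (- real n)"
  proof -
    have "\<exists>M\<ge>0. \<forall>p\<in>P. \<forall>\<xi>. AE y in lborel. norm (Dk (fst p) (snd p) (a y) \<xi>) \<le> M * jbr \<xi> powr (- real n)"
    proof (rule fin_unif)
      show "finite P" unfolding P_def by simp
      show "\<forall>p\<in>P. \<exists>M. \<forall>\<xi>. AE y in lborel. norm (Dk (fst p) (snd p) (a y) \<xi>) \<le> M * jbr \<xi> powr (- real n)"
      proof
        fix p :: "'a \<times> nat" assume p: "p \<in> P"
        have s: "set (replicate (snd p) (fst p)) \<subseteq> Basis" using p unfolding P_def by (cases "snd p = 0") auto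
        obtain C where "\<forall>\<xi>. AE x in lborel. norm (dpds (replicate (snd p) (fst p)) (a x) \<xi>)
            \<le> C * jbr \<xi> powr (- real DIM('a) - 0 * real (length (replicate (snd p) (fst p))))"
          using LB[OF s] by blast
        then have "\<forall>\<xi>. AE y in lborel. norm (Dk (fst p) (snd p) (a y) \<xi>) \<le> C * jbr \<xi> powr (- real n)"
          by (simp add: Dk_def n_def)
        then show "\<exists>M. \<forall>\<xi>. AE y in lborel. norm (Dk (fst p) (snd p) (a y) \<xi>) \<le> M * jbr \<xi> powr (- real n)" by blast
      qed
    next
      fix p :: "'a \<times> nat" and M M' :: real
      assume a1: "\<forall>\<xi>. AE y in lborel. norm (Dk (fst p) (snd p) (a y) \<xi>) \<le> M * jbr \<xi> powr (- real n)" and a2: "M \<le> M'"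
      show "\<forall>\<xi>. AE y in lborel. norm (Dk (fst p) (snd p) (a y) \<xi>) \<le> M' * jbr \<xi> powr (- real n)"
      proof
        fix \<xi> :: 'a
        have m: "M * jbr \<xi> powr (- real n) \<le> M' * jbr \<xi> powr (- real n)" using a2 by (intro mult_right_mono) auto
        show "AE y in lborel. norm (Dk (fst p) (snd p) (a y) \<xi>) \<le> M' * jbr \<xi> powr (- real n)"
          using a1[rule_format, of \<xi>] by eventually_elim (use m in linarith)
      qed
    qed
    then show ?thesis using that by blast
  qed
  obtain D :: "'a set" where D: "countable D" "\<And>U. open U \<Longrightarrow> U \<noteq> {} \<Longrightarrow> \<exists>d\<in>D. d \<in> U"
    using countable_dense_exists by blast
  have cP: "countable P" unfolding P_def by (simp add: countable_finite)
  have AEg: "AE y in lborel. \<forall>p\<in>P. \<forall>\<xi>\<in>D. norm (Dk (fst p) (snd p) (a y) \<xi>) \<le> Ca * jbr \<xi> powr (- real n)"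
    using Ca by (simp add: AE_ball_countable[OF cP] AE_ball_countable[OF D(1)])
  have good: "\<forall>p\<in>P. \<forall>\<xi>. norm (Dk (fst p) (snd p) (a y) \<xi>) \<le> Ca * jbr \<xi> powr (- real n)"
    if gy: "\<forall>p\<in>P. \<forall>\<xi>\<in>D. norm (Dk (fst p) (snd p) (a y) \<xi>) \<le> Ca * jbr \<xi> powr (- real n)" for y
  proof (intro ballI allI)
    fix p \<xi> assume p: "p \<in> P"
    have e: "fst p \<in> Basis" using p unfolding P_def by auto
    let ?U = "{\<xi>. Ca * jbr \<xi> powr (- real n) < norm (Dk (fst p) (snd p) (a y) \<xi>)}"
    have op: "open ?U"
      by (rule open_Collect_less[OF jbr_cont continuous_on_norm[OF smooth_sdir(2)[OF sm e]]])
    show "norm (Dk (fst p) (snd p) (a y) \<xi>) \<le> Ca * jbr \<xi> powr (- real n)"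
    proof (rule ccontr)
      assume "\<not> ?thesis"
      then have "\<xi> \<in> ?U" by (simp add: not_le)
      then have "?U \<noteq> {}" by blast
      then obtain d where "d \<in> D" "d \<in> ?U" using D(2)[OF op] by blast
      then show False using gy p by fastforce
    qed
  qed
  obtain Mp where Mp0: "0 \<le> Mp" and Mp: "\<forall>i\<in>{..DIM('a)+1}. \<forall>e\<in>Basis. \<forall>\<xi> j. norm (Dk e i (Ps psi j) \<xi>) \<le> Mp"
    using psi_unif[OF LP, of "DIM('a)+1"] by blast
  define k0 where "k0 = (2 * pi) powr - real DIM('a)"
  have k0: "0 < k0" unfolding k0_def by simp
  define Kc where "Kc = k0 * Kcore C0 DIM('a) Ca 0 Mp"
  have Kc0: "0 \<le> Kc" unfolding Kc_def using k0 Kcore_nonneg[OF C0 Ca0 _ Mp0, of 0] by simp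
  show ?thesis
  proof (intro exI allI impI)
    fix u :: "'a \<Rightarrow> complex" and x0 :: 'a and l :: real and j :: nat and x z :: 'a
    assume su: "schwartz u" and l0: "0 < l" and l1: "l < 1" and j1: "1 \<le> j" and xc: "x \<in> cube x0 l" and zc: "z \<in> cube x0 l"
    have pt: "AE y in lborel. norm (kernel_Kstar psim1 psi a j x y - kernel_Kstar psim1 psi a j z y) \<le> Kc * 2 ^ j * l * wt x0 (DIM('a) + 1) y"
      using AEg
    proof eventually_elim
      case (elim y)
      note gd = good[OF elim]
      have sdA: "sdir e (a y)" if "e \<in> Basis" for e using smooth_sdir(1)[OF sm that] .
      have cA: "continuous_on UNIV (a y)"
      proof -
        have "continuous_on UNIV (dpds [] (a y))"
          using sm[of y, unfolded smooth_fn_def, rule_format, of "[]"] by simp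
        then show ?thesis by simp
      qed
      have c: "norm ((\<integral>\<xi>. exp (\<i> * complex_of_real ((x - y) \<bullet> \<xi>)) * (a y \<xi> * Ps psi j \<xi>) \<partial>lborel)
          - (\<integral>\<xi>. exp (\<i> * complex_of_real ((z - y) \<bullet> \<xi>)) * (a y \<xi> * Ps psi j \<xi>) \<partial>lborel))
         \<le> Kcore C0 DIM('a) Ca 0 Mp * 2 ^ j * l * wt x0 (DIM('a) + 1) y"
      proof (rule core[OF LP Mp Mp0 l0 l1 xc zc cA cA sdA sdA Ca0 order_refl])
        fix e :: 'a and i and \<xi> :: 'a assume e: "e \<in> Basis" and i: "i \<le> DIM('a) + 1" and \<xi>: "\<xi> \<in> Ann C0 j"
        have "norm (Dk e i (a y) \<xi>) \<le> Ca * jbr \<xi> powr (- real n)"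
          using gd e i unfolding P_def N_def n_def by force
        also have "\<dots> \<le> Ca * (C0 ^ n / 2 ^ (j * n))"
          using jbr_Ann1[OF \<xi>, of n] C0 Ca0 by (intro mult_left_mono) auto
        finally show "norm (Dk e i (a y) \<xi>) \<le> Ca * (C0 ^ DIM('a) / 2 ^ (j * DIM('a)))" by (simp add: n_def)
        have "Dk e i (\<lambda>\<xi>. a y \<xi> - a y \<xi>) \<xi> = Dk e i (a y) \<xi> - Dk e i (a y) \<xi>"
          using Dk_diff[OF sdA[OF e] sdA[OF e], of i] by simp
        then show "norm (Dk e i (\<lambda>\<xi>. a y \<xi> - a y \<xi>) \<xi>) \<le> 0 * (2 ^ j * l) * (C0 ^ DIM('a) / 2 ^ (j * DIM('a)))"
          by simp
      qed
      have "norm (kernel_Kstar psim1 psi a j x y - kernel_Kstar psim1 psi a j z y) = k0 *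
          norm ((\<integral>\<xi>. exp (\<i> * complex_of_real ((x - y) \<bullet> \<xi>)) * (a y \<xi> * Ps psi j \<xi>) \<partial>lborel)
          - (\<integral>\<xi>. exp (\<i> * complex_of_real ((z - y) \<bullet> \<xi>)) * (a y \<xi> * Ps psi j \<xi>) \<partial>lborel))"
      proof -
        have jn: "j \<noteq> 0" using j1 by simp
        show ?thesis using k0 unfolding kdiff(2)[OF jn] k0_def by (simp add: norm_mult)
      qed
      also have "\<dots> \<le> k0 * (Kcore C0 DIM('a) Ca 0 Mp * 2 ^ j * l * wt x0 (DIM('a) + 1) y)"
        by (rule mult_left_mono[OF c]) (use k0 in simp)
      finally show ?case unfolding Kc_def by (simp add: algebra_simps)
    qed
    show "(\<integral>\<^sup>+ y. ennreal (norm (u y) * norm (kernel_Kstar psim1 psi a j x y - kernel_Kstar psim1 psi a j z y)) \<partial>lborel)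
        \<le> ennreal (Kc * 2 ^ (2 * DIM('a) + 2) * 2 ^ j * l) * maximal_fn u x0"
      by (rule INTB[OF schwartz_meas[OF su] pt Kc0]) (use l0 in simp)
  qed
qed


theorem lemma2p6:
  fixes a :: "'a::euclidean_space \<Rightarrow> 'a \<Rightarrow> complex"
    and psim1 psi :: "'a \<Rightarrow> real" and C0 \<delta> :: real
  assumes LP: "LP_data C0 psim1 psi"
  shows "(symbol_S (- real DIM('a)) 0 \<delta> a \<and> 0 \<le> \<delta> \<and> \<delta> < 1 \<longrightarrow>
           (\<exists>C. \<forall>u x0 l j x z. schwartz u \<longrightarrow> 0 < l \<longrightarrow> l < 1 \<longrightarrow> 1 \<le> j \<longrightarrow>
               x \<in> cube x0 l \<longrightarrow> z \<in> cube x0 l \<longrightarrow>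
               (\<integral>\<^sup>+ y. ennreal (norm (u y) * norm (kernel_K psim1 psi a j x y - kernel_K psim1 psi a j z y)) \<partial>lborel)
                 \<le> ennreal (C * 2 ^ j * l) * maximal_fn u x0)) \<and>
         (symbol_LinfS (- real DIM('a)) 0 a \<longrightarrow>
           (\<exists>C. \<forall>u x0 l j x z. schwartz u \<longrightarrow> 0 < l \<longrightarrow> l < 1 \<longrightarrow> 1 \<le> j \<longrightarrow>
               x \<in> cube x0 l \<longrightarrow> z \<in> cube x0 l \<longrightarrow>
               (\<integral>\<^sup>+ y. ennreal (norm (u y) * norm (kernel_Kstar psim1 psi a j x y - kernel_Kstar psim1 psi a j z y)) \<partial>lborel)
                 \<le> ennreal (C * 2 ^ j * l) * maximal_fn u x0))"
  proof (intro conjI impI)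
  assume h: "symbol_S (- real DIM('a)) 0 \<delta> a \<and> 0 \<le> \<delta> \<and> \<delta> < 1"
  show "\<exists>C. \<forall>u x0 l j x z. schwartz u \<longrightarrow> 0 < l \<longrightarrow> l < 1 \<longrightarrow> 1 \<le> j \<longrightarrow>
               x \<in> cube x0 l \<longrightarrow> z \<in> cube x0 l \<longrightarrow>
               (\<integral>\<^sup>+ y. ennreal (norm (u y) * norm (kernel_K psim1 psi a j x y - kernel_K psim1 psi a j z y)) \<partial>lborel)
                 \<le> ennreal (C * 2 ^ j * l) * maximal_fn u x0"
    using part1[OF LP] h by blast
next
  assume h: "symbol_LinfS (- real DIM('a)) 0 a"
  show "\<exists>C. \<forall>u x0 l j x z. schwartz u \<longrightarrow> 0 < l \<longrightarrow> l < 1 \<longrightarrow> 1 \<le> j \<longrightarrow>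
               x \<in> cube x0 l \<longrightarrow> z \<in> cube x0 l \<longrightarrow>
               (\<integral>\<^sup>+ y. ennreal (norm (u y) * norm (kernel_Kstar psim1 psi a j x y - kernel_Kstar psim1 psi a j z y)) \<partial>lborel)
                 \<le> ennreal (C * 2 ^ j * l) * maximal_fn u x0"
    using part2[OF LP] h by blast
qed

end
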